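(* For every instance $\pi$ of the fully labeled one-dimensional rearrangement problem (LOR), the algorithm OptPlanLOR computes a valid rearrangement plan that has minimum end-effector travel among all valid plans for $\pi$ that use the minimum possible number of pick-n-swaps.
   Context: Setting (LOR). A row of $m$ cells $1,\dots,m$, cell $i$ located at the point $i$ on the real line. Each cell initially holds exactly one item; items carry distinct labels $1,\dots,m$. An instance is a permutation $\pi$ of $\{1,\dots,m\}$, where $\pi_i$ is the label of the item initially in cell $i$; the goal is that item $i$ ends in cell $i$. A robot end-effector can hold at most one item; it starts at cell $1$ holding nothing. A pick-n-swap operation at a cell $p$: if holding nothing, pick up the item in $p$; if holding an item and $p$ contains an item, exchange the two; if holding an item and $p$ is empty, put the held item into $p$. A plan is a sequence $P=(p_0,p_1,\dots,p_N)$ of cells ($p_0=$ cell $1$) visited in order with a pick-n-swap at each of $p_1,\dots,p_N$, followed by a return to $p_{N+1}:=p_0$; it is valid if at the end every item $i$ is in cell $i$ and the end-effector holds nothing. $N$ is its number of pick-n-swaps and $\sum_{i=0}^N|p_i-p_{i+1}|$ its end-effector travel. Cycles: the non-trivial cycles (length $\ge 2$) of $\pi$, where cell $i$ points to cell $\pi_i$ (the goal of the item in cell $i$). For a cycle $c$ let $\min(c),\max(c)$ be its smallest and largest cell; for a set $C$ of cycles, $\min(C)=\min_{c\in C}\min(c)$, $\max(C)=\max_{c\in C}\max(c)$. Cycle groups: start with each cycle as a singleton group and repeatedly replace two groups whose intervals $[\min,\max]$ intersect by their union, until the groups' intervals are pairwise disjoint. OptPlanLOR: process the leftmost group. Within a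 group $C=\{c_1,c_2,\dots\}$ with $\min(c_1)<\min(c_2)<\dots$, start following cycle $c_1$ from cell $\min(c_1)$ by cycle following (pick the item at the starting cell, repeatedly carry the held item to its goal cell and swap, and close the cycle by placing the last item in the starting cell). When, while following a cycle, the end-effector carrying an item would pass over $\min(c')$ for the next not-yet-started cycle $c'$ of the group, it switches: at cell $\min(c')$ it swaps the carried item into that cell (parking it) and follows $c'$ in the same manner (recursively applying the same switching rule); upon closing $c'$ at $\min(c')$ it picks the parked item back up and resumes the interrupted cycle. When the end-effector reaches $\max(C)$ and there is a group to the right of $C$, it pauses and processes the next group to the right in the same way (recursively), then returns to finish $C$. After all groups are processed the end-effector returns to cell $1$. *)

theory Defs
  imports Main "HOL-Combinatorics.Permutations"
begin

text \<open>Cells are the natural numbers 1..m. An instance is a permutation pi of {1..m};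
  pi i is the label of the item initially in cell i, and item i must end in cell i.
  An arrangement maps each cell to its content (None = empty).\<close>

type_synonym arrangement = "nat \<Rightarrow> nat option"

definition init_arr :: "(nat \<Rightarrow> nat) \<Rightarrow> arrangement" where
  "init_arr pi = (\<lambda>i. Some (pi i))"

text \<open>A pick-n-swap at cell p exchanges the content of the end-effector with the content
  of cell p (this covers picking, swapping and placing).\<close>

fun pns :: "arrangement \<times> nat option \<Rightarrow> nat \<Rightarrow> arrangement \<times> nat option" where
  "pns (arr, h) p = (arr(p := h), arr p)"

definition exec_plan :: "(nat \<Rightarrow> nat) \<Rightarrow> nat list \<Rightarrow> arrangement \<times> nat option" where
  "exec_plan pi ps = foldl pns (init_arr pi, None) ps"

text \<open>A plan (p_0 = 1, p_1, ..., p_N) is represented by the list [p_1, ..., p_N] of cells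
  where pick-n-swaps are performed; its number of pick-n-swaps is the length of the list.\<close>

definition valid_plan :: "nat \<Rightarrow> (nat \<Rightarrow> nat) \<Rightarrow> nat list \<Rightarrow> bool" where
  "valid_plan m pi ps \<longleftrightarrow>
     set ps \<subseteq> {1..m} \<and>
     snd (exec_plan pi ps) = None \<and>
     (\<forall>i\<in>{1..m}. fst (exec_plan pi ps) i = Some i)"

definition cdist :: "nat \<Rightarrow> nat \<Rightarrow> nat" where
  "cdist a b = max a b - min a b"

fun path_len :: "nat list \<Rightarrow> nat" where
  "path_len (a # b # rest) = cdist a b + path_len (b # rest)"
| "path_len _ = 0"

definition travel :: "nat list \<Rightarrow> nat" where
  "travel ps = path_len (1 # ps @ [1])"

definition cycle_of :: "(nat \<Rightarrow> nat) \<Rightarrow> nat \<Rightarrow> nat set" where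
  "cycle_of pi i = {(pi ^^ n) i | n. True}"

definition lor_cycles :: "nat \<Rightarrow> (nat \<Rightarrow> nat) \<Rightarrow> nat set set" where
  "lor_cycles m pi = {cycle_of pi i | i. i \<in> {1..m} \<and> pi i \<noteq> i}"

definition intervals_meet :: "nat set \<Rightarrow> nat set \<Rightarrow> bool" where
  "intervals_meet c d \<longleftrightarrow> max (Min c) (Min d) \<le> min (Max c) (Max d)"

text \<open>Cycle groups: the result of repeatedly merging groups with intersecting intervals
  [min, max], i.e. the connected components of the "intervals intersect" relation
  on the non-trivial cycles.\<close>

definition group_of :: "nat \<Rightarrow> (nat \<Rightarrow> nat) \<Rightarrow> nat set \<Rightarrow> nat set set" where
  "group_of m pi c =
     {d \<in> lor_cycles m pi.
        (c, d) \<in> {(x, y). x \<in> lor_cycles m pi \<and> y \<in> lor_cycles m pi \<and> intervals_meet x y}\<^sup>*}"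

text \<open>State: (current position, goal cell of the held item (None = holding nothing),
  minima of the cycles already started, stack of (parking cell, goal of the parked item)).
  A cycle is identified with its minimum cell.\<close>

type_synonym alg_state = "nat \<times> nat option \<times> nat set \<times> (nat \<times> nat) list"

definition strictly_between :: "nat \<Rightarrow> nat \<Rightarrow> nat \<Rightarrow> bool" where
  "strictly_between a x b \<longleftrightarrow> min a b < x \<and> x < max a b"

definition start_cycle :: "(nat \<Rightarrow> nat) \<Rightarrow> nat \<Rightarrow> nat set \<Rightarrow> (nat \<times> nat) list
    \<Rightarrow> nat option \<Rightarrow> nat \<times> alg_state" where
  "start_cycle pi q S stk parked =
     (q, (q, Some (pi q), insert q S,
          (case parked of None \<Rightarrow> stk | Some t \<Rightarrow> (q, t) # stk)))"

text \<open>One step of OptPlanLOR: returns the next cell of the plan and the new state,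
  or None when the algorithm has finished (it then returns to cell 1).\<close>

definition opt_step :: "nat \<Rightarrow> (nat \<Rightarrow> nat) \<Rightarrow> alg_state \<Rightarrow> (nat \<times> alg_state) option" where
  "opt_step m pi s =
    (case s of (p, None, S, stk) \<Rightarrow>
        \<comment> \<open>holding nothing: start the leftmost not-yet-started cycle (if any)\<close>
        (let U = {Min c | c. c \<in> lor_cycles m pi \<and> Min c \<notin> S} in
         if U = {} then None else Some (start_cycle pi (Min U) S stk None))
     | (p, Some t, S, stk) \<Rightarrow>
        let Cp = group_of m pi (cycle_of pi p);
            R = {Min c | c. c \<in> lor_cycles m pi \<and> Min c > p};
            Ct = group_of m pi (cycle_of pi t);
            U = {Min c | c. c \<in> Ct \<and> Min c \<notin> S}
        in
        if pi p \<noteq> p \<and> p = Max (\<Union>Cp) \<and> R \<noteq> {} then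
          \<comment> \<open>reached max of the current group, and a group lies to the right:
              process the next group (parking the held item at its first cycle's minimum)\<close>
          Some (start_cycle pi (Min R) S stk (Some t))
        else if U \<noteq> {} \<and> strictly_between p (Min U) t then
          \<comment> \<open>would pass over the minimum of the next not-yet-started cycle of the group:
              park the held item there and follow that cycle\<close>
          Some (start_cycle pi (Min U) S stk (Some t))
        else
          \<comment> \<open>carry the held item to its goal cell t and pick-n-swap there\<close>
          Some (t,
            if t = Min (cycle_of pi t) then
              \<comment> \<open>closing a cycle at its minimum: pick back a parked item, if any\<close>
              (case stk of
                 (c, t') # rest \<Rightarrow> if c = t then (t, Some t', S, rest) else (t, None, S, stk)
               | [] \<Rightarrow> (t, None, S, stk))
            else (t, Some (pi t), S, stk)))"

fun opt_run :: "nat \<Rightarrow> nat \<Rightarrow> (nat \<Rightarrow> nat) \<Rightarrow> alg_state \<Rightarrow> nat list" where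
  "opt_run 0 m pi s = []"
| "opt_run (Suc n) m pi s =
     (case opt_step m pi s of None \<Rightarrow> [] | Some (v, s') \<Rightarrow> v # opt_run n m pi s')"

text \<open>The plan computed by OptPlanLOR (list of pick-n-swap cells). The algorithm performs
  at most 2m pick-n-swaps, so the fuel 2m+1 is never exhausted.\<close>

definition opt_plan_lor :: "nat \<Rightarrow> (nat \<Rightarrow> nat) \<Rightarrow> nat list" where
  "opt_plan_lor m pi = opt_run (2 * m + 1) m pi (1, None, {}, [])"

end

theory Submission
  imports Defs
begin
locale lor =
  fixes m :: nat and pi :: "nat \<Rightarrow> nat"
  assumes perm: "pi permutes {1..m}"
begin

definition cyc :: "nat \<Rightarrow> nat set" where "cyc x = cycle_of pi x"
definition mn :: "nat \<Rightarrow> nat" where "mn x = Min (cyc x)"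
definition mx :: "nat \<Rightarrow> nat" where "mx x = Max (cyc x)"
definition NT :: "nat \<Rightarrow> bool" where "NT x \<longleftrightarrow> x \<in> {1..m} \<and> pi x \<noteq> x"
definition mins :: "nat set" where "mins = {x. NT x \<and> mn x = x}"
definition ordc :: "nat \<Rightarrow> nat" where "ordc x = (LEAST n. (pi ^^ n) x = mn x)"

lemma pi_out: "x \<notin> {1..m} \<Longrightarrow> pi x = x"
  using perm by (simp add: permutes_not_in)

lemma pi_in: "x \<in> {1..m} \<Longrightarrow> pi x \<in> {1..m}"
  by (metis perm permutes_in_image)

lemma pi_inj: "inj pi"
  using perm by (simp add: permutes_inj)

lemma funpow_in: "x \<in> {1..m} \<Longrightarrow> (pi ^^ n) x \<in> {1..m}"
proof (induction n)
  case 0 then show ?case by simp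
next
  case (Suc n)
  have "(pi ^^ Suc n) x = pi ((pi ^^ n) x)" by simp
  then show ?case by (metis pi_in Suc)
qed

lemma funpow_out: "x \<notin> {1..m} \<Longrightarrow> (pi ^^ n) x = x"
  by (induction n) (auto simp: pi_out)

lemma period: obtains n where "n > 0" "(pi ^^ n) x = x"
proof -
  have "permutation pi" by (rule permutes_imp_permutation[OF _ perm]) simp
  then show ?thesis using that by (rule permutation_self)
qed

lemma funpow_mult_fix: "(pi ^^ n) x = x \<Longrightarrow> (pi ^^ (n * k)) x = x"
proof (induction k)
  case 0 then show ?case by simp
next
  case (Suc k)
  have "(pi ^^ (n * Suc k)) x = (pi ^^ n) ((pi ^^ (n * k)) x)"
    by (simp add: funpow_add)
  then show ?case using Suc by simp
qed

lemma funpow_mod: "(pi ^^ n) x = x \<Longrightarrow> (pi ^^ a) x = (pi ^^ (a mod n)) x"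
proof -
  assume h: "(pi ^^ n) x = x"
  have "a = a mod n + n * (a div n)" by simp
  then have "(pi ^^ a) x = (pi ^^ (a mod n)) ((pi ^^ (n * (a div n))) x)"
    by (metis funpow_add o_apply)
  then show ?thesis using funpow_mult_fix[OF h] by simp
qed

lemma self_cyc[simp]: "x \<in> cyc x"
  unfolding cyc_def cycle_of_def by (auto intro: exI[of _ 0])

lemma cyc_iff: "y \<in> cyc x \<longleftrightarrow> (\<exists>n. y = (pi ^^ n) x)"
  unfolding cyc_def cycle_of_def by auto

lemma cyc_funpow: "y \<in> cyc x \<Longrightarrow> (pi ^^ k) y \<in> cyc x"
  unfolding cyc_iff by (metis funpow_add o_apply)

lemma cyc_pi: "y \<in> cyc x \<Longrightarrow> pi y \<in> cyc x"
  using cyc_funpow[of y x 1] by simp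

lemma cyc_sym: "y \<in> cyc x \<Longrightarrow> x \<in> cyc y"
proof -
  assume "y \<in> cyc x"
  then obtain a where a: "y = (pi ^^ a) x" by (auto simp: cyc_iff)
  obtain n where n: "n > 0" "(pi ^^ n) x = x" by (rule period)
  have "n * Suc a \<ge> a" using n(1)
    by (metis le_add2 mult.commute mult_le_mono1 Suc_leI mult_Suc nat_mult_1 order_trans le_add1)
  then have "(pi ^^ (n * Suc a - a)) y = (pi ^^ (n * Suc a - a + a)) x"
    by (simp only: a funpow_add o_apply)
  also have "\<dots> = (pi ^^ (n * Suc a)) x" using \<open>n * Suc a \<ge> a\<close> by simp
  also have "\<dots> = x" by (rule funpow_mult_fix[OF n(2)])
  finally show ?thesis unfolding cyc_iff by metis
qed

lemma cyc_trans: "y \<in> cyc x \<Longrightarrow> z \<in> cyc y \<Longrightarrow> z \<in> cyc x"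
  unfolding cyc_iff by (metis funpow_add o_apply)

lemma cyc_eq: "y \<in> cyc x \<Longrightarrow> cyc y = cyc x"
  using cyc_trans cyc_sym by blast

lemma cyc_pi_eq: "cyc (pi x) = cyc x"
  using cyc_eq[OF cyc_pi[OF self_cyc]] .

lemma cyc_sub: "x \<in> {1..m} \<Longrightarrow> cyc x \<subseteq> {1..m}"
  using funpow_in by (auto simp: cyc_iff)

lemma cyc_out: "x \<notin> {1..m} \<Longrightarrow> cyc x = {x}"
  using funpow_out by (auto simp: cyc_iff)

lemma cyc_finite[simp]: "finite (cyc x)"
proof (cases "x \<in> {1..m}")
  case True then show ?thesis by (metis cyc_sub finite_atLeastAtMost finite_subset)
next
  case False then show ?thesis by (simp add: cyc_out)
qed

lemma cyc_fix: "pi x = x \<Longrightarrow> cyc x = {x}"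
proof -
  assume h: "pi x = x"
  have "(pi ^^ n) x = x" for n by (induction n) (auto simp: h)
  then show ?thesis by (auto simp: cyc_iff)
qed

lemma mn_in: "mn x \<in> cyc x"
  unfolding mn_def by (metis Min_in cyc_finite empty_iff self_cyc)

lemma mx_in: "mx x \<in> cyc x"
  unfolding mx_def by (metis Max_in cyc_finite empty_iff self_cyc)

lemma mn_le: "y \<in> cyc x \<Longrightarrow> mn x \<le> y"
  unfolding mn_def by simp

lemma mx_ge: "y \<in> cyc x \<Longrightarrow> y \<le> mx x"
  unfolding mx_def by simp

lemma mn_eq: "y \<in> cyc x \<Longrightarrow> mn y = mn x"
  unfolding mn_def using cyc_eq by simp

lemma mx_eq: "y \<in> cyc x \<Longrightarrow> mx y = mx x"
  unfolding mx_def using cyc_eq by simp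

lemma mn_pi[simp]: "mn (pi x) = mn x"
  unfolding mn_def using cyc_pi_eq by simp

lemma mx_pi[simp]: "mx (pi x) = mx x"
  unfolding mx_def using cyc_pi_eq by simp

lemma mn_mn[simp]: "mn (mn x) = mn x"
  using mn_eq[OF mn_in] .

lemma mn_le_self: "mn x \<le> x" by (simp add: mn_le)
lemma mx_ge_self: "x \<le> mx x" by (simp add: mx_ge)

lemma cyc_mn: "cyc (mn x) = cyc x"
  using cyc_eq[OF mn_in] .

lemma NT_cyc: "NT x \<Longrightarrow> y \<in> cyc x \<Longrightarrow> NT y"
proof -
  assume "NT x" "y \<in> cyc x"
  then have y1: "y \<in> {1..m}" using cyc_sub NT_def by blast
  have "pi y \<noteq> y"
  proof
    assume "pi y = y"
    then have "cyc y = {y}" by (rule cyc_fix)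
    moreover have "x \<in> cyc y" using \<open>y \<in> cyc x\<close> cyc_sym by blast
    ultimately have "x = y" by simp
    then show False using \<open>NT x\<close> \<open>pi y = y\<close> by (simp add: NT_def)
  qed
  then show ?thesis using y1 NT_def by simp
qed

lemma NT_pi: "NT x \<Longrightarrow> NT (pi x)"
  using NT_cyc cyc_pi self_cyc by blast

lemma NT_mn: "NT x \<Longrightarrow> NT (mn x)"
  using NT_cyc mn_in by blast

lemma NT_mx: "NT x \<Longrightarrow> NT (mx x)"
  using NT_cyc mx_in by blast

lemma mn_mins: "NT x \<Longrightarrow> mn x \<in> mins"
  using NT_mn by (simp add: mins_def)

lemma mins_iff: "u \<in> mins \<longleftrightarrow> NT u \<and> mn u = u"
  by (simp add: mins_def)

lemma NT_mn_lt_mx: "NT x \<Longrightarrow> mn x < mx x"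
proof -
  assume "NT x"
  have "x \<in> cyc x" "pi x \<in> cyc x" by (auto intro: cyc_pi)
  moreover have "pi x \<noteq> x" using \<open>NT x\<close> NT_def by simp
  ultimately have "mn x \<le> x" "x \<le> mx x" "mn x \<le> pi x" "pi x \<le> mx x" "pi x \<noteq> x"
    using mn_le mx_ge by auto
  show ?thesis
  proof (rule ccontr)
    assume "\<not> mn x < mx x"
    then have "x \<le> pi x \<and> pi x \<le> x" using \<open>mn x \<le> x\<close> \<open>x \<le> mx x\<close> \<open>mn x \<le> pi x\<close> \<open>pi x \<le> mx x\<close> by linarith
    then show False using \<open>pi x \<noteq> x\<close> by simp
  qed
qed

lemma not_NT_fix: "\<not> NT x \<Longrightarrow> pi x = x"
  using pi_out NT_def by blast

lemma NT_range: "NT x \<Longrightarrow> 1 \<le> x \<and> x \<le> m" by (simp add: NT_def)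

lemma ordc_ex: "\<exists>n. (pi ^^ n) x = mn x"
  by (metis mn_in cyc_iff)

lemma ordc_prop: "(pi ^^ ordc x) x = mn x"
  unfolding ordc_def using ordc_ex by (rule LeastI_ex)

lemma ordc_least: "(pi ^^ n) x = mn x \<Longrightarrow> ordc x \<le> n"
  unfolding ordc_def by (rule Least_le)

lemma ordc_0: "ordc x = 0 \<longleftrightarrow> x = mn x"
proof
  assume "ordc x = 0" then show "x = mn x" using ordc_prop[of x] by simp
next
  assume "x = mn x" then show "ordc x = 0" using ordc_least[of 0 x] by simp
qed

lemma ordc_pi: "x \<noteq> mn x \<Longrightarrow> ordc (pi x) = ordc x - 1"
proof -
  assume h: "x \<noteq> mn x"
  then have pos: "ordc x > 0" using ordc_0 by auto
  have "(pi ^^ (ordc x - 1)) (pi x) = (pi ^^ ordc x) x"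
    using pos by (metis Suc_diff_1 funpow_Suc_right o_apply)
  then have "(pi ^^ (ordc x - 1)) (pi x) = mn (pi x)" using ordc_prop by simp
  then have le1: "ordc (pi x) \<le> ordc x - 1" by (rule ordc_least)
  have "(pi ^^ Suc (ordc (pi x))) x = (pi ^^ ordc (pi x)) (pi x)"
    by (metis funpow_Suc_right o_apply)
  then have "(pi ^^ Suc (ordc (pi x))) x = mn x" using ordc_prop[of "pi x"] by simp
  then have "ordc x \<le> Suc (ordc (pi x))" by (rule ordc_least)
  then show ?thesis using le1 by linarith
qed

lemma ordc_inj: "mn y = mn x \<Longrightarrow> ordc y = ordc x \<Longrightarrow> y = x"
proof -
  assume a: "mn y = mn x" "ordc y = ordc x"
  have "(pi ^^ ordc x) y = (pi ^^ ordc x) x" using ordc_prop[of x] ordc_prop[of y] a by simp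
  moreover have "inj (pi ^^ ordc x)" using pi_inj by simp
  ultimately show ?thesis by (simp add: inj_eq)
qed

lemma ordc_le_start:
  assumes q: "mn q = q" "pi q \<noteq> q" and k: "k \<in> cyc q" "k \<noteq> q"
  shows "ordc k \<le> ordc (pi q)"
proof -
  define N where "N = ordc (pi q)"
  have "(pi ^^ N) (pi q) = q" using ordc_prop[of "pi q"] q by (simp add: N_def)
  then have per: "(pi ^^ Suc N) q = q" by (metis funpow_Suc_right o_apply)
  obtain a where a: "k = (pi ^^ a) q" using k by (auto simp: cyc_iff)
  define r where "r = a mod Suc N"
  have kr: "k = (pi ^^ r) q" using a funpow_mod[OF per] r_def by simp
  have "r \<noteq> 0"
  proof
    assume "r = 0" then show False using kr k(2) by simp
  qed
  have "r < Suc N" using r_def by simp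
  have "(pi ^^ (Suc N - r)) k = (pi ^^ (Suc N - r + r)) q" by (simp add: kr funpow_add)
  also have "\<dots> = q" using \<open>r < Suc N\<close> per by simp
  finally have "(pi ^^ (Suc N - r)) k = mn k" using mn_eq[OF k(1)] q by simp
  then have "ordc k \<le> Suc N - r" by (rule ordc_least)
  then show ?thesis using \<open>r \<noteq> 0\<close> N_def by linarith
qed

lemma cyc_pi_inv: "pi k \<in> cyc x \<Longrightarrow> k \<in> cyc x"
  by (metis cyc_eq cyc_pi_eq self_cyc)

end

context lor
begin

definition LC :: "nat set set" where "LC = lor_cycles m pi"
definition GR :: "(nat set \<times> nat set) set" where
  "GR = {(x, y). x \<in> lor_cycles m pi \<and> y \<in> lor_cycles m pi \<and> intervals_meet x y}"
definition G :: "nat \<Rightarrow> nat set set" where "G x = group_of m pi (cyc x)"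
definition gmax :: "nat \<Rightarrow> nat" where "gmax x = Max (\<Union> (G x))"

lemma LC_iff: "c \<in> LC \<longleftrightarrow> (\<exists>i. NT i \<and> c = cyc i)"
  unfolding LC_def lor_cycles_def NT_def cyc_def by auto

lemma LC_cyc: "NT i \<Longrightarrow> cyc i \<in> LC"
  using LC_iff by blast

lemma LC_mem: "c \<in> LC \<Longrightarrow> y \<in> c \<Longrightarrow> c = cyc y \<and> NT y"
  using LC_iff cyc_eq NT_cyc by metis

lemma LC_Min: "c \<in> LC \<Longrightarrow> Min c \<in> mins \<and> c = cyc (Min c)"
proof -
  assume "c \<in> LC"
  then obtain i where i: "NT i" "c = cyc i" using LC_iff by blast
  then have "Min c = mn i" by (simp add: mn_def)
  then show ?thesis using i mn_mins cyc_mn by simp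
qed

lemma LC_sub: "c \<in> LC \<Longrightarrow> c \<subseteq> {1..m}"
  using LC_iff cyc_sub NT_def by blast

lemma minset_S: "{Min c | c. c \<in> lor_cycles m pi \<and> Min c \<notin> S} = mins - S"
proof
  show "{Min c | c. c \<in> lor_cycles m pi \<and> Min c \<notin> S} \<subseteq> mins - S"
    using LC_Min LC_def by auto
next
  show "mins - S \<subseteq> {Min c | c. c \<in> lor_cycles m pi \<and> Min c \<notin> S}"
  proof
    fix u assume "u \<in> mins - S"
    then have "NT u" "mn u = u" "u \<notin> S" by (auto simp: mins_iff)
    then have "cyc u \<in> lor_cycles m pi" "Min (cyc u) = u" using LC_cyc LC_def mn_def by auto
    then show "u \<in> {Min c | c. c \<in> lor_cycles m pi \<and> Min c \<notin> S}" using \<open>u \<notin> S\<close> by force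
  qed
qed

lemma minset_gt: "{Min c | c. c \<in> lor_cycles m pi \<and> Min c > p} = {u \<in> mins. u > p}"
proof
  show "{Min c | c. c \<in> lor_cycles m pi \<and> Min c > p} \<subseteq> {u \<in> mins. u > p}"
    using LC_Min LC_def by auto
next
  show "{u \<in> mins. u > p} \<subseteq> {Min c | c. c \<in> lor_cycles m pi \<and> Min c > p}"
  proof
    fix u assume "u \<in> {u \<in> mins. u > p}"
    then have "NT u" "mn u = u" "u > p" by (auto simp: mins_iff)
    then have "cyc u \<in> lor_cycles m pi" "Min (cyc u) = u" using LC_cyc LC_def mn_def by auto
    then show "u \<in> {Min c | c. c \<in> lor_cycles m pi \<and> Min c > p}" using \<open>u > p\<close> by force
  qed
qed

lemma G_sub: "G x \<subseteq> LC"
  unfolding G_def group_of_def LC_def by auto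

lemma minset_grp: "{Min c | c. c \<in> group_of m pi (cycle_of pi t) \<and> Min c \<notin> S}
   = {u \<in> mins - S. cyc u \<in> G t}"
proof
  show "{Min c | c. c \<in> group_of m pi (cycle_of pi t) \<and> Min c \<notin> S} \<subseteq> {u \<in> mins - S. cyc u \<in> G t}"
  proof
    fix u assume "u \<in> {Min c | c. c \<in> group_of m pi (cycle_of pi t) \<and> Min c \<notin> S}"
    then obtain c where c: "c \<in> G t" "u = Min c" "u \<notin> S" by (auto simp: G_def cyc_def)
    then have "c \<in> LC" using G_sub by blast
    then show "u \<in> {u \<in> mins - S. cyc u \<in> G t}" using c LC_Min by auto
  qed
next
  show "{u \<in> mins - S. cyc u \<in> G t} \<subseteq> {Min c | c. c \<in> group_of m pi (cycle_of pi t) \<and> Min c \<notin> S}"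
  proof
    fix u assume "u \<in> {u \<in> mins - S. cyc u \<in> G t}"
    then have "cyc u \<in> group_of m pi (cycle_of pi t)" "Min (cyc u) = u" "u \<notin> S"
      by (auto simp: G_def cyc_def mins_iff mn_def)
    then show "u \<in> {Min c | c. c \<in> group_of m pi (cycle_of pi t) \<and> Min c \<notin> S}" by force
  qed
qed

lemma meet_sym: "intervals_meet x y = intervals_meet y x"
  unfolding intervals_meet_def by (simp add: max.commute min.commute)

lemma GR_sym: "sym GR"
  unfolding GR_def sym_def using meet_sym by auto

lemma GRs_sym: "(x, y) \<in> GR\<^sup>* \<Longrightarrow> (y, x) \<in> GR\<^sup>*"
  using sym_rtrancl[OF GR_sym] by (auto simp: sym_def)

lemma G_alt: "G x = {d \<in> LC. (cyc x, d) \<in> GR\<^sup>*}"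
  unfolding G_def group_of_def GR_def LC_def cyc_def by simp

lemma G_self: "NT x \<Longrightarrow> cyc x \<in> G x"
  unfolding G_alt using LC_cyc by simp

lemma G_eq: "cyc y \<in> G x \<Longrightarrow> G y = G x"
proof -
  assume "cyc y \<in> G x"
  then have xy: "(cyc x, cyc y) \<in> GR\<^sup>*" by (simp add: G_alt)
  then have yx: "(cyc y, cyc x) \<in> GR\<^sup>*" by (rule GRs_sym)
  have "(cyc y, d) \<in> GR\<^sup>* \<longleftrightarrow> (cyc x, d) \<in> GR\<^sup>*" for d
    using xy yx by (meson rtrancl_trans)
  then show ?thesis unfolding G_alt by simp
qed

lemma G_mem: "d \<in> G x \<Longrightarrow> y \<in> d \<Longrightarrow> G y = G x"
  using G_sub LC_mem G_eq by blast

lemma meet_cyc: "intervals_meet (cyc x) (cyc y) \<longleftrightarrow> max (mn x) (mn y) \<le> min (mx x) (mx y)"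
  unfolding intervals_meet_def mn_def mx_def by simp

lemma meet_G: "NT x \<Longrightarrow> NT y \<Longrightarrow> intervals_meet (cyc x) (cyc y) \<Longrightarrow> G y = G x"
proof -
  assume a: "NT x" "NT y" "intervals_meet (cyc x) (cyc y)"
  then have "(cyc x, cyc y) \<in> GR" unfolding GR_def using LC_cyc LC_def by auto
  then have "cyc y \<in> G x" unfolding G_alt using LC_cyc a by auto
  then show ?thesis by (rule G_eq)
qed

lemma meet_pt: "NT x \<Longrightarrow> NT y \<Longrightarrow> mn x \<le> z \<Longrightarrow> z \<le> mx x \<Longrightarrow> mn y \<le> z \<Longrightarrow> z \<le> mx y
   \<Longrightarrow> G y = G x"
  by (rule meet_G) (auto simp: meet_cyc)

lemma UG_sub: "\<Union> (G x) \<subseteq> {1..m}"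
  using G_sub LC_sub by blast

lemma UG_fin: "finite (\<Union> (G x))"
  using UG_sub finite_subset by blast

lemma gmax_ge: "NT x \<Longrightarrow> y \<in> cyc x \<Longrightarrow> y \<le> gmax x"
  unfolding gmax_def using G_self UG_fin by (meson Max_ge UnionI)

lemma mx_le_gmax: "NT x \<Longrightarrow> mx x \<le> gmax x"
  using gmax_ge mx_in by blast

lemma self_le_gmax: "NT x \<Longrightarrow> x \<le> gmax x"
  using gmax_ge self_cyc by blast

lemma gmax_in: "NT x \<Longrightarrow> \<exists>d\<in>G x. gmax x \<in> d"
proof -
  assume "NT x"
  then have "\<Union> (G x) \<noteq> {}" using G_self self_cyc by blast
  then have "gmax x \<in> \<Union> (G x)" unfolding gmax_def using UG_fin by (rule Max_in[rotated])
  then show ?thesis by blast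
qed

lemma G_gmax: "NT x \<Longrightarrow> NT (gmax x) \<and> G (gmax x) = G x"
proof -
  assume "NT x"
  then obtain d where d: "d \<in> G x" "gmax x \<in> d" using gmax_in by blast
  then have "d \<in> LC" using G_sub by blast
  then have "d = cyc (gmax x) \<and> NT (gmax x)" using LC_mem d by blast
  then show ?thesis using d G_eq by metis
qed

lemma gmax_gmax: "NT x \<Longrightarrow> gmax (gmax x) = gmax x"
  using G_gmax gmax_def by simp

lemma gmax_cyc: "y \<in> cyc x \<Longrightarrow> gmax y = gmax x"
  unfolding gmax_def G_def using cyc_eq by simp

lemma G_cyc: "y \<in> cyc x \<Longrightarrow> G y = G x"
  unfolding G_def using cyc_eq by simp

lemma gmax_pi[simp]: "gmax (pi x) = gmax x"
  using gmax_cyc cyc_pi self_cyc by blast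

lemma G_pi[simp]: "G (pi x) = G x"
  using G_cyc cyc_pi self_cyc by blast

lemma straddle: "NT x \<Longrightarrow> NT y \<Longrightarrow> mn y \<le> gmax x \<Longrightarrow> gmax x < mx y \<Longrightarrow> False"
proof -
  assume a: "NT x" "NT y" "mn y \<le> gmax x" "gmax x < mx y"
  define P where "P = gmax x"
  have P: "NT P" "G P = G x" using G_gmax a P_def by auto
  have "mn P \<le> P" "P \<le> mx P" using mn_le_self mx_ge_self by auto
  then have "G y = G P" using meet_pt[OF P(1) a(2), of P] a P_def by simp
  then have "gmax y = gmax x" using P gmax_def by simp
  then show False using mx_le_gmax[OF a(2)] a by simp
qed

lemma gmax_not_min: "NT x \<Longrightarrow> mn (gmax x) < gmax x"
proof -
  assume "NT x"
  then have "NT (gmax x)" "gmax (gmax x) = gmax x" using G_gmax gmax_gmax by auto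
  then show ?thesis using NT_mn_lt_mx mx_le_gmax by (metis order_less_le_trans)
qed

lemma gmax_notin_mins: "NT x \<Longrightarrow> gmax x \<notin> mins"
  using gmax_not_min mins_iff by fastforce

lemma mn_lt_gmax: "NT x \<Longrightarrow> mn x < gmax x"
  using NT_mn_lt_mx mx_le_gmax by (metis order_less_le_trans)

lemma gmax_bound:
  assumes x: "NT x" "mn x \<le> V" and h: "\<And>i. NT i \<Longrightarrow> mn i \<le> V \<Longrightarrow> mx i \<le> V"
  shows "gmax x \<le> V"
proof -
  have main: "(cyc x, d) \<in> GR\<^sup>* \<Longrightarrow> d \<in> LC \<Longrightarrow> Max d \<le> V" for d
  proof (induction arbitrary: rule: rtrancl_induct)
    case base
    then show ?case using h x by (simp add: mx_def)
  next
    case (step c d)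
    then have cd: "c \<in> LC" "d \<in> LC" "intervals_meet c d" unfolding GR_def LC_def by auto
    then have "Max c \<le> V" using step by simp
    obtain i where i: "NT i" "d = cyc i" using cd LC_iff by blast
    have "Min d \<le> Max c" using cd(3) unfolding intervals_meet_def by simp
    then have "mn i \<le> V" using i \<open>Max c \<le> V\<close> by (simp add: mn_def)
    then show ?case using h i by (simp add: mx_def)
  qed
  have "\<forall>z\<in>\<Union>(G x). z \<le> V"
  proof
    fix z assume "z \<in> \<Union>(G x)"
    then obtain d where d: "d \<in> G x" "z \<in> d" by blast
    then have "d \<in> LC" "(cyc x, d) \<in> GR\<^sup>*" by (auto simp: G_alt)
    then have "Max d \<le> V" using main by simp
    moreover have "finite d" using \<open>d \<in> LC\<close> LC_sub finite_subset by blast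
    ultimately show "z \<le> V" using d(2) Max_ge order_trans by blast
  qed
  moreover have "gmax x \<in> \<Union>(G x)" using gmax_in[OF x(1)] by blast
  ultimately show ?thesis by blast
qed

end

context lor
begin

lemma step_none: "opt_step m pi (p, None, S, stk) =
   (if mins - S = {} then None else Some (start_cycle pi (Min (mins - S)) S stk None))"
  unfolding opt_step_def Let_def minset_S by simp

definition Rset :: "nat \<Rightarrow> nat set" where "Rset p = {u \<in> mins. p < u}"
definition Uset :: "nat set \<Rightarrow> nat \<Rightarrow> nat set" where "Uset S t = {u \<in> mins - S. cyc u \<in> G t}"

lemma step_some: "opt_step m pi (p, Some t, S, stk) =
   (if pi p \<noteq> p \<and> p = gmax p \<and> Rset p \<noteq> {} then Some (start_cycle pi (Min (Rset p)) S stk (Some t))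
    else if Uset S t \<noteq> {} \<and> strictly_between p (Min (Uset S t)) t
      then Some (start_cycle pi (Min (Uset S t)) S stk (Some t))
    else Some (t, if t = mn t then (case stk of (c, t') # rest \<Rightarrow> if c = t then (t, Some t', S, rest) else (t, None, S, stk)
                                    | [] \<Rightarrow> (t, None, S, stk))
                  else (t, Some (pi t), S, stk)))"
  unfolding opt_step_def Let_def minset_gt minset_grp Rset_def[symmetric] Uset_def[symmetric]
  by (simp add: gmax_def G_def cyc_def mn_def)


fun chainP :: "arrangement \<Rightarrow> nat \<Rightarrow> (nat \<times> nat) list \<Rightarrow> bool" where
  "chainP arr g [] = (arr (mn g) = None)"
| "chainP arr g ((c, t') # rest) = (c = mn g \<and> arr c = Some t' \<and> mn t' < c \<and> chainP arr t' rest)"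

definition goals :: "nat option \<Rightarrow> (nat \<times> nat) list \<Rightarrow> nat list" where
  "goals h stk = (case h of None \<Rightarrow> [] | Some t \<Rightarrow> t # map snd stk)"

lemma goals_None[simp]: "goals None stk = []" by (simp add: goals_def)
lemma goals_Some[simp]: "goals (Some t) stk = t # map snd stk" by (simp add: goals_def)

definition F_hand :: "nat \<Rightarrow> nat option \<Rightarrow> nat set \<Rightarrow> (nat \<times> nat) list \<Rightarrow> arrangement \<Rightarrow> nat option \<Rightarrow> nat \<Rightarrow> bool" where
  "F_hand p h S stk arr hand V \<longleftrightarrow> hand = h"

definition F_p1 :: "nat \<Rightarrow> nat option \<Rightarrow> nat set \<Rightarrow> (nat \<times> nat) list \<Rightarrow> arrangement \<Rightarrow> nat option \<Rightarrow> nat \<Rightarrow> bool" where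
  "F_p1 p h S stk arr hand V \<longleftrightarrow> 1 \<le> p"

definition F_stk :: "nat \<Rightarrow> nat option \<Rightarrow> nat set \<Rightarrow> (nat \<times> nat) list \<Rightarrow> arrangement \<Rightarrow> nat option \<Rightarrow> nat \<Rightarrow> bool" where
  "F_stk p h S stk arr hand V \<longleftrightarrow> (h = None \<longrightarrow> stk = [])"

definition F_chain :: "nat \<Rightarrow> nat option \<Rightarrow> nat set \<Rightarrow> (nat \<times> nat) list \<Rightarrow> arrangement \<Rightarrow> nat option \<Rightarrow> nat \<Rightarrow> bool" where
  "F_chain p h S stk arr hand V \<longleftrightarrow> (\<forall>t. h = Some t \<longrightarrow> chainP arr t stk)"

definition F_goals :: "nat \<Rightarrow> nat option \<Rightarrow> nat set \<Rightarrow> (nat \<times> nat) list \<Rightarrow> arrangement \<Rightarrow> nat option \<Rightarrow> nat \<Rightarrow> bool" where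
  "F_goals p h S stk arr hand V \<longleftrightarrow> (\<forall>g \<in> set (goals h stk). NT g \<and> mn g \<in> S)"

definition F_C4a :: "nat \<Rightarrow> nat option \<Rightarrow> nat set \<Rightarrow> (nat \<times> nat) list \<Rightarrow> arrangement \<Rightarrow> nat option \<Rightarrow> nat \<Rightarrow> bool" where
  "F_C4a p h S stk arr hand V \<longleftrightarrow> (\<forall>k\<in>{1..m}. mn k \<notin> S \<longrightarrow> arr k = Some (pi k))"

definition F_C4b :: "nat \<Rightarrow> nat option \<Rightarrow> nat set \<Rightarrow> (nat \<times> nat) list \<Rightarrow> arrangement \<Rightarrow> nat option \<Rightarrow> nat \<Rightarrow> bool" where
  "F_C4b p h S stk arr hand V \<longleftrightarrow> (\<forall>k\<in>{1..m}. mn k \<in> S \<longrightarrow> mn k \<notin> mn ` set (goals h stk) \<longrightarrow> arr k = Some k)"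

definition F_C4c :: "nat \<Rightarrow> nat option \<Rightarrow> nat set \<Rightarrow> (nat \<times> nat) list \<Rightarrow> arrangement \<Rightarrow> nat option \<Rightarrow> nat \<Rightarrow> bool" where
  "F_C4c p h S stk arr hand V \<longleftrightarrow> (\<forall>k\<in>{1..m}. \<forall>g\<in>set (goals h stk). mn g = mn k \<longrightarrow> k \<noteq> mn k \<longrightarrow> arr k = (if ordc k \<le> ordc g then Some (pi k) else Some k))"

definition F_S :: "nat \<Rightarrow> nat option \<Rightarrow> nat set \<Rightarrow> (nat \<times> nat) list \<Rightarrow> arrangement \<Rightarrow> nat option \<Rightarrow> nat \<Rightarrow> bool" where
  "F_S p h S stk arr hand V \<longleftrightarrow> S = {u \<in> mins. u \<le> V}"

definition F_I4 :: "nat \<Rightarrow> nat option \<Rightarrow> nat set \<Rightarrow> (nat \<times> nat) list \<Rightarrow> arrangement \<Rightarrow> nat option \<Rightarrow> nat \<Rightarrow> bool" where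
  "F_I4 p h S stk arr hand V \<longleftrightarrow> (\<forall>k\<in>{1..m}. V < k \<longrightarrow> arr k = Some (pi k))"

definition F_I5 :: "nat \<Rightarrow> nat option \<Rightarrow> nat set \<Rightarrow> (nat \<times> nat) list \<Rightarrow> arrangement \<Rightarrow> nat option \<Rightarrow> nat \<Rightarrow> bool" where
  "F_I5 p h S stk arr hand V \<longleftrightarrow> (\<forall>t. h = Some t \<longrightarrow> mn t \<le> p \<and> p \<le> V)"

definition F_pos :: "nat \<Rightarrow> nat option \<Rightarrow> nat set \<Rightarrow> (nat \<times> nat) list \<Rightarrow> arrangement \<Rightarrow> nat option \<Rightarrow> nat \<Rightarrow> bool" where
  "F_pos p h S stk arr hand V \<longleftrightarrow> (h \<noteq> None \<longrightarrow> arr p = Some p \<or> p \<in> S)"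

definition F_I6 :: "nat \<Rightarrow> nat option \<Rightarrow> nat set \<Rightarrow> (nat \<times> nat) list \<Rightarrow> arrangement \<Rightarrow> nat option \<Rightarrow> nat \<Rightarrow> bool" where
  "F_I6 p h S stk arr hand V \<longleftrightarrow> (h \<noteq> None \<longrightarrow> NT p \<longrightarrow> p = gmax p \<longrightarrow> V = p)"

definition F_K3 :: "nat \<Rightarrow> nat option \<Rightarrow> nat set \<Rightarrow> (nat \<times> nat) list \<Rightarrow> arrangement \<Rightarrow> nat option \<Rightarrow> nat \<Rightarrow> bool" where
  "F_K3 p h S stk arr hand V \<longleftrightarrow> (\<forall>g \<in> set (goals h stk). V \<le> gmax g \<or> arr (gmax g) = Some (gmax g))"

definition F_K4 :: "nat \<Rightarrow> nat option \<Rightarrow> nat set \<Rightarrow> (nat \<times> nat) list \<Rightarrow> arrangement \<Rightarrow> nat option \<Rightarrow> nat \<Rightarrow> bool" where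
  "F_K4 p h S stk arr hand V \<longleftrightarrow> (\<forall>x. NT x \<longrightarrow> x = gmax x \<longrightarrow> arr x = Some x \<longrightarrow> (\<exists>u\<in>mins. x < u) \<longrightarrow> (\<exists>s\<in>S. x < s) \<or> (p = x \<and> h \<noteq> None))"

definition F_I9 :: "nat \<Rightarrow> nat option \<Rightarrow> nat set \<Rightarrow> (nat \<times> nat) list \<Rightarrow> arrangement \<Rightarrow> nat option \<Rightarrow> nat \<Rightarrow> bool" where
  "F_I9 p h S stk arr hand V \<longleftrightarrow> (V = 0 \<or> (NT V \<and> mn V \<in> S))"

definition Inv :: "nat \<Rightarrow> nat option \<Rightarrow> nat set \<Rightarrow> (nat \<times> nat) list \<Rightarrow> arrangement \<Rightarrow> nat option \<Rightarrow> nat \<Rightarrow> bool" where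
  "Inv p h S stk arr hand V \<longleftrightarrow> F_hand p h S stk arr hand V \<and> F_p1 p h S stk arr hand V \<and> F_stk p h S stk arr hand V \<and> F_chain p h S stk arr hand V \<and> F_goals p h S stk arr hand V \<and> F_C4a p h S stk arr hand V \<and> F_C4b p h S stk arr hand V \<and> F_C4c p h S stk arr hand V \<and> F_S p h S stk arr hand V \<and> F_I4 p h S stk arr hand V \<and> F_I5 p h S stk arr hand V \<and> F_pos p h S stk arr hand V \<and> F_I6 p h S stk arr hand V \<and> F_K3 p h S stk arr hand V \<and> F_K4 p h S stk arr hand V \<and> F_I9 p h S stk arr hand V"

lemma InvD_hand: "Inv p h S stk arr hand V \<Longrightarrow> hand = h"
  unfolding Inv_def F_hand_def by blast

lemma InvD_p1: "Inv p h S stk arr hand V \<Longrightarrow> 1 \<le> p"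
  unfolding Inv_def F_p1_def by blast

lemma InvD_stk: "Inv p h S stk arr hand V \<Longrightarrow> h = None \<Longrightarrow> stk = []"
  unfolding Inv_def F_stk_def by blast

lemma InvD_chain: "Inv p h S stk arr hand V \<Longrightarrow> h = Some t \<Longrightarrow> chainP arr t stk"
  unfolding Inv_def F_chain_def by blast

lemma InvD_goals: "Inv p h S stk arr hand V \<Longrightarrow> g \<in> set (goals h stk) \<Longrightarrow> NT g \<and> mn g \<in> S"
  unfolding Inv_def F_goals_def by blast

lemma InvD_C4a: "Inv p h S stk arr hand V \<Longrightarrow> k \<in> {1..m} \<Longrightarrow> mn k \<notin> S \<Longrightarrow> arr k = Some (pi k)"
  unfolding Inv_def F_C4a_def by blast

lemma InvD_C4b: "Inv p h S stk arr hand V \<Longrightarrow> k \<in> {1..m} \<Longrightarrow> mn k \<in> S \<Longrightarrow> mn k \<notin> mn ` set (goals h stk) \<Longrightarrow> arr k = Some k"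
  unfolding Inv_def F_C4b_def by blast

lemma InvD_C4c: "Inv p h S stk arr hand V \<Longrightarrow> k \<in> {1..m} \<Longrightarrow> g \<in> set (goals h stk) \<Longrightarrow> mn g = mn k \<Longrightarrow> k \<noteq> mn k \<Longrightarrow> arr k = (if ordc k \<le> ordc g then Some (pi k) else Some k)"
  unfolding Inv_def F_C4c_def by blast

lemma InvD_S: "Inv p h S stk arr hand V \<Longrightarrow> S = {u \<in> mins. u \<le> V}"
  unfolding Inv_def F_S_def by blast

lemma InvD_I4: "Inv p h S stk arr hand V \<Longrightarrow> k \<in> {1..m} \<Longrightarrow> V < k \<Longrightarrow> arr k = Some (pi k)"
  unfolding Inv_def F_I4_def by blast

lemma InvD_I5: "Inv p h S stk arr hand V \<Longrightarrow> h = Some t \<Longrightarrow> mn t \<le> p \<and> p \<le> V"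
  unfolding Inv_def F_I5_def by blast

lemma InvD_pos: "Inv p h S stk arr hand V \<Longrightarrow> h \<noteq> None \<Longrightarrow> arr p = Some p \<or> p \<in> S"
  unfolding Inv_def F_pos_def by blast

lemma InvD_I6: "Inv p h S stk arr hand V \<Longrightarrow> h \<noteq> None \<Longrightarrow> NT p \<Longrightarrow> p = gmax p \<Longrightarrow> V = p"
  unfolding Inv_def F_I6_def by blast

lemma InvD_K3: "Inv p h S stk arr hand V \<Longrightarrow> g \<in> set (goals h stk) \<Longrightarrow> V \<le> gmax g \<or> arr (gmax g) = Some (gmax g)"
  unfolding Inv_def F_K3_def by blast

lemma InvD_K4: "Inv p h S stk arr hand V \<Longrightarrow> NT x \<Longrightarrow> x = gmax x \<Longrightarrow> arr x = Some x \<Longrightarrow> (\<exists>u\<in>mins. x < u) \<Longrightarrow> (\<exists>s\<in>S. x < s) \<or> (p = x \<and> h \<noteq> None)"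
  unfolding Inv_def F_K4_def by blast

lemma InvD_I9: "Inv p h S stk arr hand V \<Longrightarrow> V = 0 \<or> (NT V \<and> mn V \<in> S)"
  unfolding Inv_def F_I9_def by blast

lemma InvI_F: "F_hand p h S stk arr hand V \<Longrightarrow> F_p1 p h S stk arr hand V \<Longrightarrow> F_stk p h S stk arr hand V \<Longrightarrow> F_chain p h S stk arr hand V \<Longrightarrow> F_goals p h S stk arr hand V \<Longrightarrow> F_C4a p h S stk arr hand V \<Longrightarrow> F_C4b p h S stk arr hand V \<Longrightarrow> F_C4c p h S stk arr hand V \<Longrightarrow> F_S p h S stk arr hand V \<Longrightarrow> F_I4 p h S stk arr hand V \<Longrightarrow> F_I5 p h S stk arr hand V \<Longrightarrow> F_pos p h S stk arr hand V \<Longrightarrow> F_I6 p h S stk arr hand V \<Longrightarrow> F_K3 p h S stk arr hand V \<Longrightarrow> F_K4 p h S stk arr hand V \<Longrightarrow> F_I9 p h S stk arr hand V \<Longrightarrow> Inv p h S stk arr hand V"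
  unfolding Inv_def by blast

lemma chain_mn: "chainP arr g stk \<Longrightarrow> mn g' = mn g \<Longrightarrow> chainP arr g' stk"
  by (cases stk) auto

lemma chain_frame: "chainP arr g stk \<Longrightarrow> (\<And>y. y \<in> mn ` set (g # map snd stk) \<Longrightarrow> arr' y = arr y)
   \<Longrightarrow> chainP arr' g stk"
proof (induction stk arbitrary: g)
  case Nil then show ?case by simp
next
  case (Cons a stk)
  obtain c t' where a: "a = (c, t')" by fastforce
  have "chainP arr t' stk" using Cons.prems a by simp
  moreover have "\<And>y. y \<in> mn ` set (t' # map snd stk) \<Longrightarrow> arr' y = arr y"
    using Cons.prems(2) a by auto
  ultimately have "chainP arr' t' stk" using Cons.IH by blast
  moreover have "arr' c = arr c" using Cons.prems a by auto
  moreover have "c = mn g" "arr c = Some t'" "mn t' < c" using Cons.prems a by auto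
  ultimately show ?case using a by simp
qed

lemma chain_lt: "chainP arr g stk \<Longrightarrow> g' \<in> set (map snd stk) \<Longrightarrow> mn g' < mn g"
proof (induction stk arbitrary: g)
  case Nil then show ?case by simp
next
  case (Cons a stk)
  obtain c t' where a: "a = (c, t')" by fastforce
  have h: "c = mn g" "mn t' < c" "chainP arr t' stk" using Cons.prems a by auto
  show ?case
  proof (cases "g' = t'")
    case True then show ?thesis using h by simp
  next
    case False
    then have "g' \<in> set (map snd stk)" using Cons.prems a by auto
    then have "mn g' < mn t'" using Cons.IH h by blast
    then show ?thesis using h by simp
  qed
qed

lemma not_min_cell: "t \<noteq> mn t \<Longrightarrow> t \<notin> mn ` X"
  using mn_mn by force

lemma goal_arr:
  assumes I: "Inv p (Some t) S stk arr hand V"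
  shows "arr t \<noteq> Some t"
proof (cases "t = mn t")
  case False
  have g: "NT t" using InvD_goals[OF I, of t] by simp
  then have "t \<in> {1..m}" using NT_def by simp
  then have "arr t = Some (pi t)" using InvD_C4c[OF I, of t t] False by simp
  then show ?thesis using g NT_def by simp
next
  case True
  have ch: "chainP arr t stk" using InvD_chain[OF I] by simp
  show ?thesis
  proof (cases stk)
    case Nil then show ?thesis using ch True by (metis chainP.simps(1) option.distinct(1))
  next
    case (Cons a rest)
    obtain c t' where a: "a = (c, t')" by fastforce
    then have "c = t" "arr t = Some t'" "mn t' < t" using ch Cons True by auto
    show ?thesis
    proof
      assume "arr t = Some t"
      then have "t' = t" using \<open>arr t = Some t'\<close> by simp
      then show False using \<open>mn t' < t\<close> True by simp
    qed
  qed
qed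

lemma Inv_S_sub: "Inv p h S stk arr hand V \<Longrightarrow> S \<subseteq> mins"
  using InvD_S by blast

lemma Inv_unstarted: "Inv p h S stk arr hand V \<Longrightarrow> u \<in> mins \<Longrightarrow> u \<notin> S \<Longrightarrow> V < u"
  using InvD_S by fastforce

lemma Inv_started: "Inv p h S stk arr hand V \<Longrightarrow> u \<in> S \<Longrightarrow> u \<le> V"
  using InvD_S by fastforce

lemma SR:
  assumes I: "Inv p None S [] arr None V" and V: "V > 0"
  shows "mins \<subseteq> S"
proof
  fix u assume u: "u \<in> mins"
  show "u \<in> S"
  proof (rule ccontr)
    assume "u \<notin> S"
    then have Vu: "V < u" using Inv_unstarted[OF I u] by simp
    have NV: "NT V" "mn V \<in> S" using InvD_I9[OF I] V by auto
    have corr: "arr k = Some k" if "k \<in> {1..m}" "mn k \<in> S" for k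
      using InvD_C4b[OF I that] by simp
    have bnd: "mx i \<le> V" if "NT i" "mn i \<le> V" for i
    proof (rule ccontr)
      assume "\<not> mx i \<le> V"
      have "mn i \<in> S" using InvD_S[OF I] that mn_mins by simp
      have "NT (mx i)" using NT_mx that by simp
      then have mi: "mx i \<in> {1..m}" using NT_def by simp
      have "mn (mx i) = mn i" using mn_eq mx_in by blast
      then have "arr (mx i) = Some (mx i)" using corr mi \<open>mn i \<in> S\<close> by simp
      moreover have "arr (mx i) = Some (pi (mx i))" using InvD_I4[OF I mi] \<open>\<not> mx i \<le> V\<close> by simp
      ultimately show False using \<open>NT (mx i)\<close> NT_def by simp
    qed
    have "gmax V \<le> V" by (rule gmax_bound[OF NV(1) mn_le_self]) (rule bnd)
    then have gV: "gmax V = V" using self_le_gmax NV by (simp add: le_antisym)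
    have "arr V = Some V" using corr NV NT_def by simp
    then have "(\<exists>s\<in>S. V < s) \<or> (p = V \<and> (None::nat option) \<noteq> None)"
      using InvD_K4[OF I NV(1) gV[symmetric]] u Vu by blast
    then show False using Inv_started[OF I] by fastforce
  qed
qed

end

context lor
begin

definition Phi :: "arrangement \<Rightarrow> nat set \<Rightarrow> nat" where
  "Phi arr S = card {k \<in> {1..m}. arr k \<noteq> Some k} + card (mins - S)"

lemma NT_in: "NT x \<Longrightarrow> x \<in> {1..m}" by (simp add: NT_def)

lemma mins_D: "u \<in> mins \<Longrightarrow> NT u \<and> mn u = u" by (simp add: mins_iff)

lemma mins_fin: "finite mins"
proof -
  have "mins \<subseteq> {1..m}" using mins_D NT_in by blast
  then show ?thesis using finite_subset by blast
qed

lemma cyc_of_mn: "mn k = q \<Longrightarrow> k \<in> cyc q"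
proof -
  assume a: "mn k = q"
  have "mn k \<in> cyc k" by (rule mn_in)
  then have "k \<in> cyc (mn k)" by (rule cyc_sym)
  then show ?thesis using a by simp
qed

lemma Phi_start:
  assumes q: "q \<in> mins" "q \<notin> S" and a: "arr q \<noteq> Some q" "v \<noteq> Some q"
  shows "Phi (arr(q := v)) (insert q S) + 1 = Phi arr S"
proof -
  have "{k \<in> {1..m}. (arr(q := v)) k \<noteq> Some k} = {k \<in> {1..m}. arr k \<noteq> Some k}"
    using a by auto
  moreover have "card (mins - S) = Suc (card (mins - insert q S))"
  proof -
    have e: "mins - S = insert q (mins - insert q S)" using q by auto
    have "finite (mins - insert q S)" using mins_fin by simp
    then have "card (insert q (mins - insert q S)) = Suc (card (mins - insert q S))"
      by (rule card_insert_disjoint) simp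
    then show ?thesis by (simp only: e)
  qed
  ultimately show ?thesis unfolding Phi_def by simp
qed

lemma Phi_carry:
  assumes t: "t \<in> {1..m}" and a: "arr t \<noteq> Some t"
  shows "Phi (arr(t := Some t)) S + 1 = Phi arr S"
proof -
  have e: "{k \<in> {1..m}. arr k \<noteq> Some k} = insert t {k \<in> {1..m}. (arr(t := Some t)) k \<noteq> Some k}"
    using a t by auto
  have "finite {k \<in> {1..m}. (arr(t := Some t)) k \<noteq> Some k}" by simp
  moreover have "t \<notin> {k \<in> {1..m}. (arr(t := Some t)) k \<noteq> Some k}" by simp
  ultimately have "card {k \<in> {1..m}. arr k \<noteq> Some k} = Suc (card {k \<in> {1..m}. (arr(t := Some t)) k \<noteq> Some k})"
    using e by simp
  then show ?thesis unfolding Phi_def by simp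
qed

lemma push_common:
  assumes I: "Inv p (Some t) S stk arr hand V"
    and q: "q \<in> mins" "q \<notin> S" and tq: "mn t < q" and Vq: "V \<le> q"
    and S': "insert q S = {u \<in> mins. u \<le> q}"
    and K3': "\<And>g. g \<in> set (t # map snd stk) \<Longrightarrow> q \<le> gmax g \<or> arr (gmax g) = Some (gmax g)"
    and K4': "\<And>x. NT x \<Longrightarrow> x = gmax x \<Longrightarrow> arr x = Some x \<Longrightarrow> (\<exists>u\<in>mins. x < u) \<Longrightarrow> (\<exists>s\<in>insert q S. x < s)"
  shows "Inv q (Some (pi q)) (insert q S) ((q, t) # stk) (arr(q := hand)) (arr q) (max V q)"
    and "Phi (arr(q := hand)) (insert q S) + 1 = Phi arr S"
proof -
  have ht: "hand = Some t" using InvD_hand[OF I] by simp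
  have NTq: "NT q" "mn q = q" using mins_D q by auto
  have q1: "q \<in> {1..m}" using NTq NT_in by simp
  have aq: "arr q = Some (pi q)" using InvD_C4a[OF I q1] NTq q by simp
  have gs: "\<And>g. g \<in> set (t # map snd stk) \<Longrightarrow> NT g \<and> mn g \<in> S"
    using InvD_goals[OF I] by simp
  have qng: "q \<notin> mn ` set (t # map snd stk)" using gs q by force
  have Vq': "max V q = q" using Vq by simp
  define arr' where "arr' = arr(q := Some t)"
  have arr'_ne: "\<And>y. y \<noteq> q \<Longrightarrow> arr' y = arr y" by (simp add: arr'_def)
  have tneq: "t \<noteq> q" using tq NTq by auto
  have "Inv q (Some (pi q)) (insert q S) ((q, t) # stk) arr' (arr q) q"
  proof (rule InvI_F)
    show "F_hand q (Some (pi q)) (insert q S) ((q, t) # stk) arr' (arr q) q"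
      unfolding F_hand_def using aq by simp
    show "F_p1 q (Some (pi q)) (insert q S) ((q, t) # stk) arr' (arr q) q"
      unfolding F_p1_def using q1 by simp
    show "F_stk q (Some (pi q)) (insert q S) ((q, t) # stk) arr' (arr q) q"
      unfolding F_stk_def by simp
    show "F_chain q (Some (pi q)) (insert q S) ((q, t) # stk) arr' (arr q) q"
    proof -
      have "chainP arr t stk" using InvD_chain[OF I] by simp
      then have "chainP arr' t stk"
        by (rule chain_frame) (use qng arr'_ne in force)
      then show ?thesis unfolding F_chain_def using NTq tq by (simp add: arr'_def)
    qed
    show "F_goals q (Some (pi q)) (insert q S) ((q, t) # stk) arr' (arr q) q"
      unfolding F_goals_def using gs NTq NT_pi by auto
    show "F_C4a q (Some (pi q)) (insert q S) ((q, t) # stk) arr' (arr q) q"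
      unfolding F_C4a_def
    proof (intro ballI impI)
      fix k assume k: "k \<in> {1..m}" "mn k \<notin> insert q S"
      then have "k \<noteq> q" using NTq by auto
      then show "arr' k = Some (pi k)" using InvD_C4a[OF I] k arr'_ne by simp
    qed
    show "F_C4b q (Some (pi q)) (insert q S) ((q, t) # stk) arr' (arr q) q"
      unfolding F_C4b_def
    proof (intro ballI impI)
      fix k assume k: "k \<in> {1..m}" "mn k \<in> insert q S"
        "mn k \<notin> mn ` set (goals (Some (pi q)) ((q, t) # stk))"
      then have "mn k \<noteq> q" using NTq by auto
      then have "k \<noteq> q" "mn k \<in> S" "mn k \<notin> mn ` set (goals (Some t) stk)" using k NTq by auto
      then show "arr' k = Some k" using InvD_C4b[OF I] k arr'_ne by simp
    qed
    show "F_C4c q (Some (pi q)) (insert q S) ((q, t) # stk) arr' (arr q) q"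
      unfolding F_C4c_def
    proof (intro ballI impI)
      fix k g assume k: "k \<in> {1..m}" "g \<in> set (goals (Some (pi q)) ((q, t) # stk))"
        "mn g = mn k" "k \<noteq> mn k"
      show "arr' k = (if ordc k \<le> ordc g then Some (pi k) else Some k)"
      proof (cases "g = pi q")
        case True
        then have mk: "mn k = q" using k NTq by simp
        then have "k \<noteq> q" using k by auto
        have "k \<in> cyc q" by (rule cyc_of_mn[OF mk])
        then have "ordc k \<le> ordc (pi q)" using ordc_le_start NTq \<open>k \<noteq> q\<close> NT_def by blast
        moreover have "arr' k = Some (pi k)" using InvD_C4a[OF I k(1)] mk q \<open>k \<noteq> q\<close> arr'_ne by simp
        ultimately show ?thesis using True by simp
      next
        case False
        then have g: "g \<in> set (goals (Some t) stk)" using k by simp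
        then have "mn g \<in> S" using gs by simp
        then have "k \<noteq> q" using k q NTq by auto
        then show ?thesis using InvD_C4c[OF I k(1) g] k arr'_ne by simp
      qed
    qed
    show "F_S q (Some (pi q)) (insert q S) ((q, t) # stk) arr' (arr q) q"
      unfolding F_S_def using S' by simp
    show "F_I4 q (Some (pi q)) (insert q S) ((q, t) # stk) arr' (arr q) q"
      unfolding F_I4_def using InvD_I4[OF I] arr'_ne Vq by force
    show "F_I5 q (Some (pi q)) (insert q S) ((q, t) # stk) arr' (arr q) q"
      unfolding F_I5_def using NTq by simp
    show "F_pos q (Some (pi q)) (insert q S) ((q, t) # stk) arr' (arr q) q"
      unfolding F_pos_def by simp
    show "F_I6 q (Some (pi q)) (insert q S) ((q, t) # stk) arr' (arr q) q"
      unfolding F_I6_def using gmax_notin_mins q by metis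
    show "F_K3 q (Some (pi q)) (insert q S) ((q, t) # stk) arr' (arr q) q"
      unfolding F_K3_def
    proof
      fix g assume g: "g \<in> set (goals (Some (pi q)) ((q, t) # stk))"
      show "q \<le> gmax g \<or> arr' (gmax g) = Some (gmax g)"
      proof (cases "g = pi q")
        case True then show ?thesis using self_le_gmax NTq by simp
      next
        case False
        then have g': "g \<in> set (t # map snd stk)" using g by simp
        then have "NT g" using gs by simp
        then have "gmax g \<noteq> q" using gmax_notin_mins q by metis
        then show ?thesis using K3'[OF g'] arr'_ne by simp
      qed
    qed
    show "F_K4 q (Some (pi q)) (insert q S) ((q, t) # stk) arr' (arr q) q"
      unfolding F_K4_def
    proof (intro allI impI)
      fix x assume x: "NT x" "x = gmax x" "arr' x = Some x" "\<exists>u\<in>mins. x < u"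
      have "x \<noteq> q" using gmax_notin_mins[OF x(1)] x(2) q by metis
      then have "arr x = Some x" using x arr'_ne by simp
      then show "(\<exists>s\<in>insert q S. x < s) \<or> (q = x \<and> Some (pi q) \<noteq> None)" using K4' x by blast
    qed
    show "F_I9 q (Some (pi q)) (insert q S) ((q, t) # stk) arr' (arr q) q"
      unfolding F_I9_def using NTq by simp
  qed
  then show "Inv q (Some (pi q)) (insert q S) ((q, t) # stk) (arr(q := hand)) (arr q) (max V q)"
    using ht Vq' arr'_def by simp
  show "Phi (arr(q := hand)) (insert q S) + 1 = Phi arr S"
    using Phi_start[OF q, of arr hand] aq NTq ht tneq NT_def by auto
qed

lemma Uset_fin: "finite (Uset S t)"
  using mins_fin unfolding Uset_def by (rule finite_subset[rotated]) auto

lemma Rset_fin: "finite (Rset p)"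
  using mins_fin unfolding Rset_def by (rule finite_subset[rotated]) auto

lemma meet_U:
  assumes I: "Inv p (Some t) S stk arr hand V" and u: "u \<in> mins" "V < u" "u < t"
  shows "u \<in> Uset S t"
proof -
  have t: "NT t" "mn t \<in> S" using InvD_goals[OF I, of t] by auto
  have "mn t \<le> p" "p \<le> V" using InvD_I5[OF I] by auto
  have nu: "NT u" "mn u = u" using mins_D u by auto
  have "G u = G t"
    by (rule meet_pt[OF t(1) nu(1), of u]) (use \<open>mn t \<le> p\<close> \<open>p \<le> V\<close> u nu mx_ge_self[of t] mx_ge_self[of u] in auto)
  then have "cyc u \<in> G t" using G_self nu by metis
  moreover have "u \<notin> S" using Inv_started[OF I] u by fastforce
  ultimately show ?thesis using u unfolding Uset_def by simp
qed

lemma meet_gmax: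
  assumes I: "Inv p (Some t) S stk arr hand V" and y: "NT y" "y = gmax y" "V \<le> y" "y < t"
  shows False
proof -
  have t: "NT t" using InvD_goals[OF I, of t] by auto
  have "mn t \<le> p" "p \<le> V" using InvD_I5[OF I] by auto
  have "G y = G t"
    by (rule meet_pt[OF t y(1), of y]) (use \<open>mn t \<le> p\<close> \<open>p \<le> V\<close> y mx_ge_self[of t] mx_ge_self[of y] mn_le_self[of y] in auto)
  then have "gmax y = gmax t" by (simp add: gmax_def)
  then show False using y self_le_gmax[OF t] by simp
qed

lemma nR_K4:
  assumes I: "Inv p h S stk arr hand V" and nR: "\<not> (pi p \<noteq> p \<and> p = gmax p \<and> Rset p \<noteq> {})"
    and x: "NT x" "x = gmax x" "arr x = Some x" "\<exists>u\<in>mins. x < u"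
  shows "\<exists>s\<in>S. x < s"
proof -
  have "(\<exists>s\<in>S. x < s) \<or> (p = x \<and> h \<noteq> None)" using InvD_K4[OF I x] .
  moreover have "\<not> (p = x)"
  proof
    assume "p = x"
    then have "pi p \<noteq> p" "p = gmax p" "Rset p \<noteq> {}" using x NT_def Rset_def by auto
    then show False using nR by simp
  qed
  ultimately show ?thesis by simp
qed

lemma root_start:
  assumes I: "Inv p None S stk arr hand V" and ne: "mins - S \<noteq> {}"
  shows "V = 0" "S = {}" "stk = []" "Min (mins - S) = Min mins"
    "Inv (Min mins) (Some (pi (Min mins))) {Min mins} [] (arr(Min mins := hand)) (arr (Min mins)) (max V (Min mins))"
    "Phi (arr(Min mins := hand)) (insert (Min mins) S) + 1 = Phi arr S"
    "Min mins \<in> {1..m}"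
proof -
  show stk: "stk = []" using InvD_stk[OF I] by simp
  have hd: "hand = None" using InvD_hand[OF I] by simp
  show V0: "V = 0"
  proof (rule ccontr)
    assume "V \<noteq> 0"
    then have "mins \<subseteq> S" using SR[of p S arr V] I stk hd by simp
    then show False using ne by simp
  qed
  show S0: "S = {}" using InvD_S[OF I] V0 mins_D NT_def by fastforce
  then show "Min (mins - S) = Min mins" by simp
  define q where "q = Min mins"
  have qm: "q \<in> mins" using ne S0 mins_fin Min_in q_def by simp
  have qmin: "\<And>u. u \<in> mins \<Longrightarrow> q \<le> u" using mins_fin q_def by simp
  have NTq: "NT q" "mn q = q" using mins_D qm by auto
  have q1: "q \<in> {1..m}" using NTq NT_in by simp
  then show "Min mins \<in> {1..m}" using q_def by simp
  have aq: "arr q = Some (pi q)" using InvD_C4a[OF I q1] NTq S0 by simp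
  define arr' where "arr' = arr(q := None)"
  have arr'_ne: "\<And>y. y \<noteq> q \<Longrightarrow> arr' y = arr y" by (simp add: arr'_def)
  have "Inv q (Some (pi q)) {q} [] arr' (arr q) q"
  proof (rule InvI_F)
    show "F_hand q (Some (pi q)) {q} [] arr' (arr q) q"
      unfolding F_hand_def using aq by simp
    show "F_p1 q (Some (pi q)) {q} [] arr' (arr q) q"
      unfolding F_p1_def using q1 by simp
    show "F_stk q (Some (pi q)) {q} [] arr' (arr q) q"
      unfolding F_stk_def by simp
    show "F_chain q (Some (pi q)) {q} [] arr' (arr q) q"
      unfolding F_chain_def using NTq by (simp add: arr'_def)
    show "F_goals q (Some (pi q)) {q} [] arr' (arr q) q"
      unfolding F_goals_def using NTq NT_pi by auto
    show "F_C4a q (Some (pi q)) {q} [] arr' (arr q) q"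
      unfolding F_C4a_def
    proof (intro ballI impI)
      fix k assume k: "k \<in> {1..m}" "mn k \<notin> {q}"
      then have "k \<noteq> q" using NTq by auto
      then show "arr' k = Some (pi k)" using InvD_C4a[OF I] k arr'_ne S0 by simp
    qed
    show "F_C4b q (Some (pi q)) {q} [] arr' (arr q) q"
      unfolding F_C4b_def using NTq by simp
    show "F_C4c q (Some (pi q)) {q} [] arr' (arr q) q"
      unfolding F_C4c_def
    proof (intro ballI impI)
      fix k g assume k: "k \<in> {1..m}" "g \<in> set (goals (Some (pi q)) [])" "mn g = mn k" "k \<noteq> mn k"
      then have gq: "g = pi q" by simp
      then have mk: "mn k = q" using k NTq by simp
      then have "k \<noteq> q" using k by auto
      have "k \<in> cyc q" by (rule cyc_of_mn[OF mk])
      then have "ordc k \<le> ordc (pi q)" using ordc_le_start NTq \<open>k \<noteq> q\<close> NT_def by blast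
      moreover have "arr' k = Some (pi k)" using InvD_C4a[OF I k(1)] S0 \<open>k \<noteq> q\<close> arr'_ne by simp
      ultimately show "arr' k = (if ordc k \<le> ordc g then Some (pi k) else Some k)" using gq by simp
    qed
    show "F_S q (Some (pi q)) {q} [] arr' (arr q) q"
      unfolding F_S_def using qm qmin by (auto intro: le_antisym)
    show "F_I4 q (Some (pi q)) {q} [] arr' (arr q) q"
      unfolding F_I4_def using InvD_I4[OF I] arr'_ne V0 NTq q1 by force
    show "F_I5 q (Some (pi q)) {q} [] arr' (arr q) q"
      unfolding F_I5_def using NTq by simp
    show "F_pos q (Some (pi q)) {q} [] arr' (arr q) q"
      unfolding F_pos_def by simp
    show "F_I6 q (Some (pi q)) {q} [] arr' (arr q) q"
      unfolding F_I6_def using gmax_notin_mins qm by metis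
    show "F_K3 q (Some (pi q)) {q} [] arr' (arr q) q"
      unfolding F_K3_def using self_le_gmax NTq by simp
    show "F_K4 q (Some (pi q)) {q} [] arr' (arr q) q"
      unfolding F_K4_def
    proof (intro allI impI)
      fix x assume x: "NT x" "x = gmax x" "arr' x = Some x" "\<exists>u\<in>mins. x < u"
      have "x \<noteq> q" using gmax_notin_mins[OF x(1)] x(2) qm by metis
      then have "arr x = Some x" using x arr'_ne by simp
      then have "(\<exists>s\<in>S. x < s) \<or> (p = x \<and> None \<noteq> (None::nat option))"
        using InvD_K4[OF I x(1,2)] x(4) by blast
      then show "(\<exists>s\<in>{q}. x < s) \<or> (q = x \<and> Some (pi q) \<noteq> None)" using S0 by simp
    qed
    show "F_I9 q (Some (pi q)) {q} [] arr' (arr q) q"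
      unfolding F_I9_def using NTq by simp
  qed
  then show "Inv (Min mins) (Some (pi (Min mins))) {Min mins} [] (arr(Min mins := hand)) (arr (Min mins)) (max V (Min mins))"
    using hd V0 arr'_def q_def by simp
  show "Phi (arr(Min mins := hand)) (insert (Min mins) S) + 1 = Phi arr S"
    using Phi_start[of q S arr hand] qm S0 aq NTq hd NT_def q_def by auto
qed

end

context lor
begin

lemma carry_step:
  assumes I: "Inv p (Some t) S stk arr hand V"
    and nR: "\<not> (pi p \<noteq> p \<and> p = gmax p \<and> Rset p \<noteq> {})"
    and nU: "\<not> (Uset S t \<noteq> {} \<and> strictly_between p (Min (Uset S t)) t)"
    and nm: "t \<noteq> mn t"
  shows "Inv t (Some (pi t)) S stk (arr(t := hand)) (arr t) (max V t)"
    and "Phi (arr(t := hand)) S + 1 = Phi arr S"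
    and "t \<in> {1..m}"
proof -
  have ht: "hand = Some t" using InvD_hand[OF I] by simp
  have gs: "\<And>g. g \<in> set (t # map snd stk) \<Longrightarrow> NT g \<and> mn g \<in> S"
    using InvD_goals[OF I] by simp
  have NTt: "NT t" "mn t \<in> S" using gs by auto
  show t1: "t \<in> {1..m}" using NTt NT_in by simp
  have at: "arr t = Some (pi t)" using InvD_C4c[OF I t1, of t] nm by simp
  have pV: "mn t \<le> p" "p \<le> V" using InvD_I5[OF I] by auto
  have ch: "chainP arr t stk" using InvD_chain[OF I] by simp
  have ordpos: "ordc t > 0" using nm ordc_0 by auto
  have ordpi: "ordc (pi t) = ordc t - 1" using ordc_pi nm by simp
  have nle: "\<not> ordc t \<le> ordc (pi t)" using ordpos ordpi by linarith
  define arr' where "arr' = arr(t := Some t)"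
  have arr'_ne: "\<And>y. y \<noteq> t \<Longrightarrow> arr' y = arr y" by (simp add: arr'_def)
  have arr'_corr: "\<And>y. arr y = Some y \<Longrightarrow> arr' y = Some y" by (simp add: arr'_def)
  have noU: "\<And>u. u \<in> mins \<Longrightarrow> V < u \<Longrightarrow> u < t \<Longrightarrow> False"
  proof -
    fix u assume u: "u \<in> mins" "V < u" "u < t"
    then have uU: "u \<in> Uset S t" using meet_U[OF I] by simp
    then have ne: "Uset S t \<noteq> {}" by auto
    have "Min (Uset S t) \<in> Uset S t" using ne Uset_fin by simp
    then have "Min (Uset S t) \<in> mins" "Min (Uset S t) \<notin> S" unfolding Uset_def by auto
    then have "V < Min (Uset S t)" using Inv_unstarted[OF I] by simp
    moreover have "Min (Uset S t) \<le> u" using uU Uset_fin by simp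
    ultimately have "strictly_between p (Min (Uset S t)) t"
      unfolding strictly_between_def using pV u by simp
    then show False using nU ne by simp
  qed
  have "Inv t (Some (pi t)) S stk arr' (arr t) (max V t)"
  proof (rule InvI_F)
    show "F_hand t (Some (pi t)) S stk arr' (arr t) (max V t)"
      unfolding F_hand_def using at by simp
    show "F_p1 t (Some (pi t)) S stk arr' (arr t) (max V t)"
      unfolding F_p1_def using t1 by simp
    show "F_stk t (Some (pi t)) S stk arr' (arr t) (max V t)"
      unfolding F_stk_def by simp
    show "F_chain t (Some (pi t)) S stk arr' (arr t) (max V t)"
    proof -
      have "chainP arr (pi t) stk" using chain_mn[OF ch] by simp
      then have "chainP arr' (pi t) stk"
        by (rule chain_frame) (metis not_min_cell[OF nm] arr'_ne)
      then show ?thesis unfolding F_chain_def by simp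
    qed
    show "F_goals t (Some (pi t)) S stk arr' (arr t) (max V t)"
      unfolding F_goals_def using gs NTt NT_pi by auto
    show "F_C4a t (Some (pi t)) S stk arr' (arr t) (max V t)"
      unfolding F_C4a_def
    proof (intro ballI impI)
      fix k assume k: "k \<in> {1..m}" "mn k \<notin> S"
      then have "k \<noteq> t" using NTt by auto
      then show "arr' k = Some (pi k)" using InvD_C4a[OF I] k arr'_ne by simp
    qed
    show "F_C4b t (Some (pi t)) S stk arr' (arr t) (max V t)"
      unfolding F_C4b_def
    proof (intro ballI impI)
      fix k assume k: "k \<in> {1..m}" "mn k \<in> S" "mn k \<notin> mn ` set (goals (Some (pi t)) stk)"
      then have k': "mn k \<notin> mn ` set (goals (Some t) stk)" by simp
      then have "k \<noteq> t" by auto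
      then show "arr' k = Some k" using InvD_C4b[OF I k(1,2) k'] arr'_ne by simp
    qed
    show "F_C4c t (Some (pi t)) S stk arr' (arr t) (max V t)"
      unfolding F_C4c_def
    proof (intro ballI impI)
      fix k g assume k: "k \<in> {1..m}" "g \<in> set (goals (Some (pi t)) stk)" "mn g = mn k" "k \<noteq> mn k"
      show "arr' k = (if ordc k \<le> ordc g then Some (pi k) else Some k)"
      proof (cases "g = pi t")
        case True
        then have mk: "mn k = mn t" using k by simp
        show ?thesis
        proof (cases "k = t")
          case True
          then show ?thesis using \<open>g = pi t\<close> nle by (simp add: arr'_def)
        next
          case False
          then have "ordc k \<noteq> ordc t" using ordc_inj mk by blast
          moreover have "arr k = (if ordc k \<le> ordc t then Some (pi k) else Some k)"
            using InvD_C4c[OF I k(1), of t] mk k by simp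
          ultimately show ?thesis using \<open>g = pi t\<close> ordpi False arr'_ne by auto
        qed
      next
        case False
        then have g: "g \<in> set (map snd stk)" using k by simp
        then have "mn g < mn t" using chain_lt[OF ch] by simp
        then have "k \<noteq> t" using k by auto
        moreover have "g \<in> set (goals (Some t) stk)" using g by simp
        ultimately show ?thesis using InvD_C4c[OF I k(1)] k arr'_ne by simp
      qed
    qed
    show "F_S t (Some (pi t)) S stk arr' (arr t) (max V t)"
      unfolding F_S_def
    proof (cases "t \<le> V")
      case True then show "S = {u \<in> mins. u \<le> max V t}" using InvD_S[OF I] by (simp add: max_def)
    next
      case False
      have "u \<le> V" if "u \<in> mins" "u \<le> t" for u
      proof (rule ccontr)
        assume "\<not> u \<le> V"
        show False
        proof (cases "u = t")
          case True then show False using that mins_D nm by simp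
        next
          case False
          then have "u < t" using that by simp
          moreover have "V < u" using \<open>\<not> u \<le> V\<close> by simp
          ultimately show False using noU that(1) by blast
        qed
      qed
      then show "S = {u \<in> mins. u \<le> max V t}" using InvD_S[OF I] False by (auto simp: max_def)
    qed
    show "F_I4 t (Some (pi t)) S stk arr' (arr t) (max V t)"
      unfolding F_I4_def using InvD_I4[OF I] arr'_ne by force
    show "F_I5 t (Some (pi t)) S stk arr' (arr t) (max V t)"
      unfolding F_I5_def using mn_le_self[of t] by simp
    show "F_pos t (Some (pi t)) S stk arr' (arr t) (max V t)"
      unfolding F_pos_def by (simp add: arr'_def)
    show "F_I6 t (Some (pi t)) S stk arr' (arr t) (max V t)"
      unfolding F_I6_def
    proof (intro impI)
      assume a: "NT t" "t = gmax t"
      have "V \<le> gmax t \<or> arr (gmax t) = Some (gmax t)" using InvD_K3[OF I, of t] by simp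
      then have "V \<le> t" using a goal_arr[OF I] by auto
      then show "max V t = t" by simp
    qed
    show "F_K3 t (Some (pi t)) S stk arr' (arr t) (max V t)"
      unfolding F_K3_def
    proof
      fix g assume g: "g \<in> set (goals (Some (pi t)) stk)"
      define g0 where "g0 = (if g = pi t then t else g)"
      have g0: "g0 \<in> set (goals (Some t) stk)" "gmax g0 = gmax g" using g g0_def by auto
      have NTg: "NT g0" using gs g0 by simp
      have "V \<le> gmax g0 \<or> arr (gmax g0) = Some (gmax g0)" using InvD_K3[OF I g0(1)] .
      then show "max V t \<le> gmax g \<or> arr' (gmax g) = Some (gmax g)"
      proof
        assume "arr (gmax g0) = Some (gmax g0)"
        then show ?thesis using arr'_corr g0 by simp
      next
        assume Vy: "V \<le> gmax g0"
        show ?thesis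
        proof (cases "t \<le> gmax g0")
          case True then show ?thesis using Vy g0 by simp
        next
          case False
          have "NT (gmax g0)" "gmax g0 = gmax (gmax g0)" using G_gmax NTg gmax_gmax by auto
          then show ?thesis using meet_gmax[OF I _ _ Vy] False by simp
        qed
      qed
    qed
    show "F_K4 t (Some (pi t)) S stk arr' (arr t) (max V t)"
      unfolding F_K4_def
    proof (intro allI impI)
      fix x assume x: "NT x" "x = gmax x" "arr' x = Some x" "\<exists>u\<in>mins. x < u"
      show "(\<exists>s\<in>S. x < s) \<or> (t = x \<and> Some (pi t) \<noteq> None)"
      proof (cases "x = t")
        case True then show ?thesis by simp
      next
        case False
        then have "arr x = Some x" using x arr'_ne by simp
        then show ?thesis using nR_K4[OF I nR x(1,2)] x(4) by blast
      qed
    qed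
    show "F_I9 t (Some (pi t)) S stk arr' (arr t) (max V t)"
      unfolding F_I9_def using InvD_I9[OF I] NTt by (auto simp: max_def)
  qed
  then show "Inv t (Some (pi t)) S stk (arr(t := hand)) (arr t) (max V t)"
    using ht arr'_def by simp
  show "Phi (arr(t := hand)) S + 1 = Phi arr S"
    using Phi_carry[of t arr S] t1 goal_arr[OF I] ht by simp
qed

lemma pop_step:
  assumes I: "Inv p (Some t) S ((c, t1) # rest) arr hand V"
    and nR: "\<not> (pi p \<noteq> p \<and> p = gmax p \<and> Rset p \<noteq> {})"
    and tm: "t = mn t"
  shows "c = t"
    and "Inv t (Some t1) S rest (arr(t := hand)) (arr t) (max V t)"
    and "Phi (arr(t := hand)) S + 1 = Phi arr S"
    and "t \<in> {1..m}"
proof -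
  have ht: "hand = Some t" using InvD_hand[OF I] by simp
  have gs: "\<And>g. g \<in> set (t # t1 # map snd rest) \<Longrightarrow> NT g \<and> mn g \<in> S"
    using InvD_goals[OF I] by simp
  have NTt: "NT t" "mn t \<in> S" using gs by auto
  show t1m: "t \<in> {1..m}" using NTt NT_in by simp
  have ch: "chainP arr t ((c, t1) # rest)" by (rule InvD_chain[OF I]) (rule refl)
  then show ct: "c = t" using tm by simp
  have h0: "c = mn t \<and> arr c = Some t1 \<and> mn t1 < c \<and> chainP arr t1 rest"
    using ch by (metis chainP.simps(2))
  then have h: "arr c = Some t1" "mn t1 < c" "chainP arr t1 rest" by blast+
  have at: "arr t = Some t1" "mn t1 < t" "chainP arr t1 rest" using h ct by simp_all
  have pV: "mn t \<le> p" "p \<le> V" using InvD_I5[OF I] by auto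
  have tV: "max V t = V" using pV tm by simp
  have lt: "\<And>g. g \<in> set (t1 # map snd rest) \<Longrightarrow> mn g < t"
    using chain_lt[OF ch] tm by auto
  define arr' where "arr' = arr(t := Some t)"
  have arr'_ne: "\<And>y. y \<noteq> t \<Longrightarrow> arr' y = arr y" by (simp add: arr'_def)
  have arr'_corr: "\<And>y. arr y = Some y \<Longrightarrow> arr' y = Some y" by (simp add: arr'_def)
  have "Inv t (Some t1) S rest arr' (arr t) V"
  proof (rule InvI_F)
    show "F_hand t (Some t1) S rest arr' (arr t) V"
      unfolding F_hand_def using at by simp
    show "F_p1 t (Some t1) S rest arr' (arr t) V"
      unfolding F_p1_def using t1m by simp
    show "F_stk t (Some t1) S rest arr' (arr t) V"
      unfolding F_stk_def by simp
    show "F_chain t (Some t1) S rest arr' (arr t) V"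
    proof -
      have "chainP arr' t1 rest"
      proof (rule chain_frame[OF at(3)])
        fix y assume "y \<in> mn ` set (t1 # map snd rest)"
        then have "y < t" using lt by auto
        then show "arr' y = arr y" using arr'_ne by simp
      qed
      then show ?thesis unfolding F_chain_def by simp
    qed
    show "F_goals t (Some t1) S rest arr' (arr t) V"
      unfolding F_goals_def using gs by auto
    show "F_C4a t (Some t1) S rest arr' (arr t) V"
      unfolding F_C4a_def
    proof (intro ballI impI)
      fix k assume k: "k \<in> {1..m}" "mn k \<notin> S"
      then have "k \<noteq> t" using NTt by auto
      then show "arr' k = Some (pi k)" using InvD_C4a[OF I] k arr'_ne by simp
    qed
    show "F_C4b t (Some t1) S rest arr' (arr t) V"
      unfolding F_C4b_def
    proof (intro ballI impI)
      fix k assume k: "k \<in> {1..m}" "mn k \<in> S" "mn k \<notin> mn ` set (goals (Some t1) rest)"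
      show "arr' k = Some k"
      proof (cases "k = t")
        case True then show ?thesis by (simp add: arr'_def)
      next
        case False
        show ?thesis
        proof (cases "mn k = t")
          case True
          then have kmn: "k \<noteq> mn k" using False by simp
          then have "ordc k \<noteq> 0" using ordc_0 by simp
          moreover have "ordc t = 0" using tm ordc_0 by simp
          moreover have "arr k = (if ordc k \<le> ordc t then Some (pi k) else Some k)"
            by (rule InvD_C4c[OF I k(1)]) (use True tm kmn in auto)
          ultimately have "arr k = Some k" by simp
          then show ?thesis using arr'_ne False by simp
        next
          case False
          then have "mn k \<notin> mn ` set (goals (Some t) ((c, t1) # rest))" using k tm by auto
          then show ?thesis using InvD_C4b[OF I k(1,2)] arr'_ne \<open>k \<noteq> t\<close> by simp
        qed
      qed
    qed
    show "F_C4c t (Some t1) S rest arr' (arr t) V"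
      unfolding F_C4c_def
    proof (intro ballI impI)
      fix k g assume k: "k \<in> {1..m}" "g \<in> set (goals (Some t1) rest)" "mn g = mn k" "k \<noteq> mn k"
      have "mn g < t" by (rule lt) (use k(2) in simp)
      then have "k \<noteq> t" using k tm by auto
      moreover have "g \<in> set (goals (Some t) ((c, t1) # rest))" using k by simp
      ultimately show "arr' k = (if ordc k \<le> ordc g then Some (pi k) else Some k)"
        using InvD_C4c[OF I k(1)] k arr'_ne by simp
    qed
    show "F_S t (Some t1) S rest arr' (arr t) V"
      unfolding F_S_def using InvD_S[OF I] by simp
    show "F_I4 t (Some t1) S rest arr' (arr t) V"
      unfolding F_I4_def using InvD_I4[OF I] arr'_ne pV tm by force
    show "F_I5 t (Some t1) S rest arr' (arr t) V"
      unfolding F_I5_def using at pV tm by simp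
    show "F_pos t (Some t1) S rest arr' (arr t) V"
      unfolding F_pos_def by (simp add: arr'_def)
    show "F_I6 t (Some t1) S rest arr' (arr t) V"
      unfolding F_I6_def using gmax_not_min tm by (metis less_irrefl)
    show "F_K3 t (Some t1) S rest arr' (arr t) V"
      unfolding F_K3_def
    proof
      fix g assume g: "g \<in> set (goals (Some t1) rest)"
      then have "g \<in> set (goals (Some t) ((c, t1) # rest))" by simp
      then have "V \<le> gmax g \<or> arr (gmax g) = Some (gmax g)" using InvD_K3[OF I] by blast
      then show "V \<le> gmax g \<or> arr' (gmax g) = Some (gmax g)" using arr'_corr by blast
    qed
    show "F_K4 t (Some t1) S rest arr' (arr t) V"
      unfolding F_K4_def
    proof (intro allI impI)
      fix x assume x: "NT x" "x = gmax x" "arr' x = Some x" "\<exists>u\<in>mins. x < u"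
      have "x \<noteq> t" using gmax_not_min[OF x(1)] x(2) tm by (metis less_irrefl)
      then have "arr x = Some x" using x arr'_ne by simp
      then show "(\<exists>s\<in>S. x < s) \<or> (t = x \<and> Some t1 \<noteq> None)"
        using nR_K4[OF I nR x(1,2)] x(4) by blast
    qed
    show "F_I9 t (Some t1) S rest arr' (arr t) V"
      unfolding F_I9_def using InvD_I9[OF I] by simp
  qed
  then show "Inv t (Some t1) S rest (arr(t := hand)) (arr t) (max V t)"
    using ht arr'_def tV by simp
  show "Phi (arr(t := hand)) S + 1 = Phi arr S"
    using Phi_carry[of t arr S] t1m goal_arr[OF I] ht by simp
qed

lemma close_root:
  assumes I: "Inv p (Some t) S [] arr hand V"
    and nR: "\<not> (pi p \<noteq> p \<and> p = gmax p \<and> Rset p \<noteq> {})"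
    and tm: "t = mn t"
  shows "arr t = None"
    and "Inv t None S [] (arr(t := hand)) (arr t) (max V t)"
    and "Phi (arr(t := hand)) S + 1 = Phi arr S"
    and "t \<in> {1..m}"
proof -
  have ht: "hand = Some t" using InvD_hand[OF I] by simp
  have NTt: "NT t" "mn t \<in> S" using InvD_goals[OF I, of t] by auto
  show t1m: "t \<in> {1..m}" using NTt NT_in by simp
  have ch: "chainP arr t []" using InvD_chain[OF I] by simp
  then show at: "arr t = None" using tm by simp
  have pV: "mn t \<le> p" "p \<le> V" using InvD_I5[OF I] by auto
  have tV: "max V t = V" using pV tm by simp
  define arr' where "arr' = arr(t := Some t)"
  have arr'_ne: "\<And>y. y \<noteq> t \<Longrightarrow> arr' y = arr y" by (simp add: arr'_def)
  have "Inv t None S [] arr' (arr t) V"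
  proof (rule InvI_F)
    show "F_hand t None S [] arr' (arr t) V"
      unfolding F_hand_def using at by simp
    show "F_p1 t None S [] arr' (arr t) V"
      unfolding F_p1_def using t1m by simp
    show "F_stk t None S [] arr' (arr t) V"
      unfolding F_stk_def by simp
    show "F_chain t None S [] arr' (arr t) V"
      unfolding F_chain_def by simp
    show "F_goals t None S [] arr' (arr t) V"
      unfolding F_goals_def by simp
    show "F_C4a t None S [] arr' (arr t) V"
      unfolding F_C4a_def
    proof (intro ballI impI)
      fix k assume k: "k \<in> {1..m}" "mn k \<notin> S"
      then have "k \<noteq> t" using NTt by auto
      then show "arr' k = Some (pi k)" using InvD_C4a[OF I] k arr'_ne by simp
    qed
    show "F_C4b t None S [] arr' (arr t) V"
      unfolding F_C4b_def
    proof (intro ballI impI)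
      fix k assume k: "k \<in> {1..m}" "mn k \<in> S" "mn k \<notin> mn ` set (goals None [])"
      show "arr' k = Some k"
      proof (cases "k = t")
        case True then show ?thesis by (simp add: arr'_def)
      next
        case False
        show ?thesis
        proof (cases "mn k = t")
          case True
          then have kmn: "k \<noteq> mn k" using False by simp
          then have "ordc k \<noteq> 0" using ordc_0 by simp
          moreover have "ordc t = 0" using tm ordc_0 by simp
          moreover have "arr k = (if ordc k \<le> ordc t then Some (pi k) else Some k)"
            by (rule InvD_C4c[OF I k(1)]) (use True tm kmn in auto)
          ultimately have "arr k = Some k" by simp
          then show ?thesis using arr'_ne False by simp
        next
          case False
          then have "mn k \<notin> mn ` set (goals (Some t) [])" using k tm by auto
          then show ?thesis using InvD_C4b[OF I k(1,2)] arr'_ne \<open>k \<noteq> t\<close> by simp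
        qed
      qed
    qed
    show "F_C4c t None S [] arr' (arr t) V"
      unfolding F_C4c_def by simp
    show "F_S t None S [] arr' (arr t) V"
      unfolding F_S_def using InvD_S[OF I] by simp
    show "F_I4 t None S [] arr' (arr t) V"
      unfolding F_I4_def using InvD_I4[OF I] arr'_ne pV tm by force
    show "F_I5 t None S [] arr' (arr t) V"
      unfolding F_I5_def by simp
    show "F_pos t None S [] arr' (arr t) V"
      unfolding F_pos_def by simp
    show "F_I6 t None S [] arr' (arr t) V"
      unfolding F_I6_def by simp
    show "F_K3 t None S [] arr' (arr t) V"
      unfolding F_K3_def by simp
    show "F_K4 t None S [] arr' (arr t) V"
      unfolding F_K4_def
    proof (intro allI impI)
      fix x assume x: "NT x" "x = gmax x" "arr' x = Some x" "\<exists>u\<in>mins. x < u"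
      have "x \<noteq> t" using gmax_not_min[OF x(1)] x(2) tm by (metis less_irrefl)
      then have "arr x = Some x" using x arr'_ne by simp
      then show "(\<exists>s\<in>S. x < s) \<or> (t = x \<and> (None::nat option) \<noteq> None)"
        using nR_K4[OF I nR x(1,2)] x(4) by blast
    qed
    show "F_I9 t None S [] arr' (arr t) V"
      unfolding F_I9_def using InvD_I9[OF I] by simp
  qed
  then show "Inv t None S [] (arr(t := hand)) (arr t) (max V t)"
    using ht arr'_def tV by simp
  show "Phi (arr(t := hand)) S + 1 = Phi arr S"
    using Phi_carry[of t arr S] t1m goal_arr[OF I] ht by simp
qed

lemma U_branch:
  assumes I: "Inv p (Some t) S stk arr hand V"
    and nR: "\<not> (pi p \<noteq> p \<and> p = gmax p \<and> Rset p \<noteq> {})"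
    and U: "Uset S t \<noteq> {}" and sb: "strictly_between p (Min (Uset S t)) t"
  defines "q \<equiv> Min (Uset S t)"
  shows "Inv q (Some (pi q)) (insert q S) ((q, t) # stk) (arr(q := hand)) (arr q) (max V q)"
    and "Phi (arr(q := hand)) (insert q S) + 1 = Phi arr S"
    and "q \<in> {1..m}" "p < q" "q < t"
proof -
  have qU: "q \<in> Uset S t" using U Uset_fin q_def by simp
  then have q: "q \<in> mins" "q \<notin> S" unfolding Uset_def by auto
  have Vq: "V < q" using Inv_unstarted[OF I q] .
  have pV: "mn t \<le> p" "p \<le> V" using InvD_I5[OF I] by auto
  show pq: "p < q" using Vq pV by simp
  show qt: "q < t" using sb pq q_def unfolding strictly_between_def by (auto simp: min_def max_def split: if_splits)
  show "q \<in> {1..m}" using q mins_D NT_in by blast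
  have S': "insert q S = {u \<in> mins. u \<le> q}"
  proof
    show "insert q S \<subseteq> {u \<in> mins. u \<le> q}" using q Vq InvD_S[OF I] by auto
  next
    show "{u \<in> mins. u \<le> q} \<subseteq> insert q S"
    proof
      fix u assume u: "u \<in> {u \<in> mins. u \<le> q}"
      show "u \<in> insert q S"
      proof (cases "u \<le> V")
        case True then show ?thesis using u InvD_S[OF I] by simp
      next
        case False
        show ?thesis
        proof (cases "u = q")
          case True then show ?thesis by simp
        next
          case False
          then have "u < t" "V < u" using u qt \<open>\<not> u \<le> V\<close> by auto
          then have "u \<in> Uset S t" using meet_U[OF I] u by simp
          then have "q \<le> u" using Uset_fin q_def by simp
          then show ?thesis using u False by simp
        qed
      qed
    qed
  qed
  have K3': "q \<le> gmax g \<or> arr (gmax g) = Some (gmax g)" if g: "g \<in> set (t # map snd stk)" for g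
  proof -
    have "V \<le> gmax g \<or> arr (gmax g) = Some (gmax g)" using InvD_K3[OF I] g by simp
    moreover have "NT g" using InvD_goals[OF I] g by simp
    then have "NT (gmax g)" "gmax g = gmax (gmax g)" using G_gmax gmax_gmax by auto
    ultimately show ?thesis using meet_gmax[OF I] qt by force
  qed
  have K4': "\<exists>s\<in>insert q S. x < s"
    if x: "NT x" "x = gmax x" "arr x = Some x" "\<exists>u\<in>mins. x < u" for x
    using nR_K4[OF I nR x] by blast
  have tq: "mn t < q" using pV pq by simp
  show "Inv q (Some (pi q)) (insert q S) ((q, t) # stk) (arr(q := hand)) (arr q) (max V q)"
    using push_common(1)[OF I q tq less_imp_le[OF Vq] S' K3' K4'] .
  show "Phi (arr(q := hand)) (insert q S) + 1 = Phi arr S"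
    using push_common(2)[OF I q tq less_imp_le[OF Vq] S' K3' K4'] .
qed

lemma R_branch:
  assumes I: "Inv p (Some t) S stk arr hand V"
    and R: "pi p \<noteq> p" "p = gmax p" "Rset p \<noteq> {}"
  defines "q \<equiv> Min (Rset p)"
  shows "Inv q (Some (pi q)) (insert q S) ((q, t) # stk) (arr(q := hand)) (arr q) (max V q)"
    and "Phi (arr(q := hand)) (insert q S) + 1 = Phi arr S"
    and "q \<in> {1..m}" "t \<le> p" "V = p" "NT p"
proof -
  have qR: "q \<in> Rset p" using R Rset_fin q_def by simp
  then have qm: "q \<in> mins" "p < q" unfolding Rset_def by auto
  have qmin: "\<And>u. u \<in> mins \<Longrightarrow> p < u \<Longrightarrow> q \<le> u" using Rset_fin q_def Rset_def by simp
  show NTp: "NT p" using R pi_out NT_def by blast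
  show Vp: "V = p" using InvD_I6[OF I _ NTp R(2)] by simp
  have "q \<notin> S"
  proof
    assume "q \<in> S"
    then have "q \<le> V" by (rule Inv_started[OF I])
    then show False using Vp qm by simp
  qed
  then have q: "q \<in> mins" "q \<notin> S" using qm by auto
  have pV: "mn t \<le> p" "p \<le> V" using InvD_I5[OF I] by auto
  show "q \<in> {1..m}" using q mins_D NT_in by blast
  have NTt: "NT t" using InvD_goals[OF I, of t] by simp
  have "mx t \<le> p"
  proof (rule ccontr)
    assume "\<not> mx t \<le> p"
    then show False using straddle[OF NTp NTt] pV R(2) by simp
  qed
  then show "t \<le> p" using mx_ge_self[of t] by simp
  have S': "insert q S = {u \<in> mins. u \<le> q}"
  proof
    show "insert q S \<subseteq> {u \<in> mins. u \<le> q}" using q qm Vp InvD_S[OF I] by auto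
  next
    show "{u \<in> mins. u \<le> q} \<subseteq> insert q S"
    proof
      fix u assume u: "u \<in> {u \<in> mins. u \<le> q}"
      show "u \<in> insert q S"
      proof (cases "u \<le> p")
        case True then show ?thesis using u InvD_S[OF I] Vp by simp
      next
        case False
        then have "q \<le> u" using qmin u by simp
        then show ?thesis using u by simp
      qed
    qed
  qed
  have K3': "q \<le> gmax g \<or> arr (gmax g) = Some (gmax g)" if g: "g \<in> set (t # map snd stk)" for g
  proof -
    have K: "V \<le> gmax g \<or> arr (gmax g) = Some (gmax g)" using InvD_K3[OF I] g by simp
    have "NT g" using InvD_goals[OF I] g by simp
    then have NTy: "NT (gmax g)" "gmax g = gmax (gmax g)" using G_gmax gmax_gmax by auto
    show ?thesis
    proof (cases "arr (gmax g) = Some (gmax g)")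
      case True then show ?thesis by simp
    next
      case False
      then have py: "p \<le> gmax g" using K Vp by simp
      show ?thesis
      proof (cases "gmax g = p")
        case True
        have "arr p = Some p \<or> p \<in> S" using InvD_pos[OF I] by simp
        moreover have "p \<notin> S" using Inv_S_sub[OF I] gmax_notin_mins[OF NTp] R(2) by force
        ultimately show ?thesis using True False by simp
      next
        case False
        then have "p < gmax g" using py by simp
        have "\<not> mn (gmax g) \<le> p"
        proof
          assume "mn (gmax g) \<le> p"
          moreover have "p < mx (gmax g)" using \<open>p < gmax g\<close> mx_ge_self[of "gmax g"] by simp
          ultimately show False using straddle[OF NTp NTy(1)] R(2) by simp
        qed
        then have "q \<le> mn (gmax g)" using qmin mn_mins[OF NTy(1)] by simp
        then show ?thesis using mn_le_self[of "gmax g"] by simp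
      qed
    qed
  qed
  have K4': "\<exists>s\<in>insert q S. x < s"
    if x: "NT x" "x = gmax x" "arr x = Some x" "\<exists>u\<in>mins. x < u" for x
  proof -
    have "(\<exists>s\<in>S. x < s) \<or> (p = x \<and> Some t \<noteq> None)" using InvD_K4[OF I x] .
    then show ?thesis using qm by auto
  qed
  have tq: "mn t < q" using pV qm by simp
  have Vq: "V \<le> q" using Vp qm by simp
  show "Inv q (Some (pi q)) (insert q S) ((q, t) # stk) (arr(q := hand)) (arr q) (max V q)"
    using push_common(1)[OF I q tq Vq S' K3' K4'] .
  show "Phi (arr(q := hand)) (insert q S) + 1 = Phi arr S"
    using push_common(2)[OF I q tq Vq S' K3' K4'] .
qed

end

context lor
begin

definition shape :: "nat \<Rightarrow> nat option \<Rightarrow> nat \<Rightarrow> nat \<Rightarrow> bool" where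
  "shape p hand V p' \<longleftrightarrow>
     (hand = None \<and> V = 0 \<and> p' = Min mins \<and> p' \<in> mins) \<or>
     (\<exists>g. hand = Some g \<and> min p g \<le> p' \<and> p' \<le> max p g) \<or>
     (\<exists>g. hand = Some g \<and> g \<le> p \<and> V = p \<and> NT p \<and> p = gmax p \<and> Rset p \<noteq> {} \<and> p' = Min (Rset p))"

lemma start_cycle_simp: "start_cycle pi q S stk None = (q, (q, Some (pi q), insert q S, stk))"
  "start_cycle pi q S stk (Some t) = (q, (q, Some (pi q), insert q S, (q, t) # stk))"
  unfolding start_cycle_def by simp_all

lemma step_ok:
  assumes I: "Inv p h S stk arr hand V" and st: "opt_step m pi (p, h, S, stk) = Some (p', s')"
  shows "\<exists>h' S' stk'. s' = (p', h', S', stk') \<and> Inv p' h' S' stk' (arr(p' := hand)) (arr p') (max V p')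
     \<and> Phi (arr(p' := hand)) S' + 1 = Phi arr S \<and> p' \<in> {1..m} \<and> shape p hand V p'"
proof (cases h)
  case None
  then have ne: "mins - S \<noteq> {}" and eq: "Some (p', s') = Some (start_cycle pi (Min (mins - S)) S stk None)"
    using st step_none by (auto split: if_splits)
  have I': "Inv p None S stk arr hand V" using I None by simp
  note rs = root_start[OF I' ne]
  have hd: "hand = None" using InvD_hand[OF I] None by simp
  have p': "p' = Min mins" "s' = (Min mins, Some (pi (Min mins)), insert (Min mins) S, stk)"
    using eq rs(4) start_cycle_simp by auto
  have "mins \<noteq> {}" using ne by blast
  then have "Min mins \<in> mins" using Min_in[OF mins_fin] by blast
  then show ?thesis using rs p' hd by (auto simp: shape_def)
next
  case (Some t)
  have I': "Inv p (Some t) S stk arr hand V" using I Some by simp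
  have ht: "hand = Some t" using InvD_hand[OF I] Some by simp
  show ?thesis
  proof (cases "pi p \<noteq> p \<and> p = gmax p \<and> Rset p \<noteq> {}")
    case True
    then have eq: "(p', s') = start_cycle pi (Min (Rset p)) S stk (Some t)"
      using st Some step_some by simp
    then have p': "p' = Min (Rset p)" "s' = (p', Some (pi p'), insert p' S, (p', t) # stk)"
      using start_cycle_simp by auto
    note rb = R_branch[OF I'] True
    show ?thesis using rb p' ht by (auto simp: shape_def)
  next
    case nR: False
    show ?thesis
    proof (cases "Uset S t \<noteq> {} \<and> strictly_between p (Min (Uset S t)) t")
      case True
      then have eq: "(p', s') = start_cycle pi (Min (Uset S t)) S stk (Some t)"
        using st Some step_some nR by simp
      then have p': "p' = Min (Uset S t)" "s' = (p', Some (pi p'), insert p' S, (p', t) # stk)"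
        using start_cycle_simp by auto
      note ub = U_branch[OF I' nR] True
      have "min p t \<le> p'" "p' \<le> max p t" using ub p' by auto
      then show ?thesis using ub p' ht True by (auto simp: shape_def)
    next
      case nU: False
      have st0: "opt_step m pi (p, Some t, S, stk) = Some (t, if t = mn t then (case stk of (c, t') # rest \<Rightarrow> if c = t then (t, Some t', S, rest) else (t, None, S, stk)
                                    | [] \<Rightarrow> (t, None, S, stk))
                  else (t, Some (pi t), S, stk))"
        using step_some[of p t S stk] nR nU by presburger
      show ?thesis
      proof (cases "t = mn t")
        case False
        then have "opt_step m pi (p, Some t, S, stk) = Some (t, (t, Some (pi t), S, stk))"
          using st0 by simp
        then have s': "p' = t" "s' = (t, Some (pi t), S, stk)" using st Some by auto
        have sh: "shape p hand V p'" using s' ht by (auto simp: shape_def)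
        note cs = carry_step[OF I' nR nU False]
        show ?thesis using cs s' sh by auto
      next
        case tm: True
        show ?thesis
        proof (cases stk)
          case Nil
          then have "opt_step m pi (p, Some t, S, stk) = Some (t, (t, None, S, []))"
            using st0 tm by simp
          then have s': "p' = t" "s' = (t, None, S, [])" using st Some by auto
          have sh: "shape p hand V p'" using s' ht by (auto simp: shape_def)
          have I'': "Inv p (Some t) S [] arr hand V" using I' Nil by simp
          note cr = close_root[OF I'' nR tm]
          show ?thesis using cr s' sh by auto
        next
          case (Cons a rest)
          obtain c t1 where a: "a = (c, t1)" by fastforce
          have I'': "Inv p (Some t) S ((c, t1) # rest) arr hand V" using I' Cons a by simp
          note ps = pop_step[OF I'' nR tm]
          have "opt_step m pi (p, Some t, S, stk) = Some (t, (t, Some t1, S, rest))"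
            using st0 tm Cons a ps(1) by simp
          then have s': "p' = t" "s' = (t, Some t1, S, rest)" using st Some by auto
          have sh: "shape p hand V p'" using s' ht by (auto simp: shape_def)
          show ?thesis using ps s' sh by auto
        qed
      qed
    qed
  qed
qed

lemma step_None:
  assumes I: "Inv p h S stk arr hand V" and st: "opt_step m pi (p, h, S, stk) = None"
  shows "hand = None" "\<forall>i\<in>{1..m}. arr i = Some i" "Phi arr S = 0"
proof -
  have hN: "h = None"
  proof (cases h)
    case (Some t) then show ?thesis using st step_some by (simp split: if_splits)
  qed simp
  then have ms: "mins - S = {}" using st step_none by (auto split: if_splits)
  show "hand = None" using InvD_hand[OF I] hN by simp
  have stk: "stk = []" using InvD_stk[OF I] hN by simp
  show all: "\<forall>i\<in>{1..m}. arr i = Some i"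
  proof
    fix i assume i: "i \<in> {1..m}"
    show "arr i = Some i"
    proof (cases "NT i")
      case True
      then have "mn i \<in> S" using mn_mins ms by blast
      then show ?thesis using InvD_C4b[OF I i] hN by simp
    next
      case False
      then have pi: "pi i = i" using not_NT_fix by simp
      then have "mn i = i" using cyc_fix mn_def by simp
      then have "mn i \<notin> S" using Inv_S_sub[OF I] False mins_D by auto
      then show ?thesis using InvD_C4a[OF I i] pi by simp
    qed
  qed
  have e1: "{k \<in> {1..m}. arr k \<noteq> Some k} = {}" using all by auto
  show "Phi arr S = 0" unfolding Phi_def by (simp only: e1 ms card.empty add_0)
qed

end

fun ups :: "nat \<Rightarrow> nat list \<Rightarrow> nat" where
  "ups x (a # b # r) = (if a \<le> x \<and> x < b then 1 else 0) + ups x (b # r)"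
| "ups x _ = 0"

definition Gf :: "nat \<Rightarrow> nat option \<Rightarrow> bool" where
  "Gf x ov \<longleftrightarrow> (\<exists>g. ov = Some g \<and> x < g)"

definition Iq :: "nat \<Rightarrow> arrangement \<Rightarrow> nat option \<Rightarrow> nat \<Rightarrow> nat" where
  "Iq x arr hand p = card {k \<in> {1..x}. Gf x (arr k)} + (if p \<le> x \<and> Gf x hand then 1 else 0)"

lemma card_split: "finite F \<Longrightarrow> a \<in> F \<Longrightarrow>
   card {k \<in> F. P k} = card {k \<in> F - {a}. P k} + (if P a then 1 else 0)"
proof -
  assume f: "finite F" and a: "a \<in> F"
  show ?thesis
  proof (cases "P a")
    case True
    then have "{k \<in> F. P k} = insert a {k \<in> F - {a}. P k}" using a by auto
    moreover have "finite {k \<in> F - {a}. P k}" using f by simp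
    moreover have "a \<notin> {k \<in> F - {a}. P k}" by simp
    ultimately show ?thesis using True by simp
  next
    case False
    then have "{k \<in> F. P k} = {k \<in> F - {a}. P k}" by auto
    then show ?thesis using False by simp
  qed
qed

lemma Iq_step:
  assumes p1: "1 \<le> p'"
  shows "Iq x (arr(p' := hand)) (arr p') p' + (if p \<le> x \<and> x < p' \<and> Gf x hand then 1 else 0)
       = Iq x arr hand p + (if p' \<le> x \<and> x < p \<and> Gf x hand then 1 else 0)"
proof (cases "p' \<le> x")
  case True
  then have pin: "p' \<in> {1..x}" using p1 by simp
  have c1: "card {k \<in> {1..x}. Gf x ((arr(p' := hand)) k)} = card {k \<in> {1..x} - {p'}. Gf x (arr k)} + (if Gf x hand then 1 else 0)"
  proof -
    have "card {k \<in> {1..x}. Gf x ((arr(p' := hand)) k)} = card {k \<in> {1..x} - {p'}. Gf x ((arr(p' := hand)) k)} + (if Gf x ((arr(p' := hand)) p') then 1 else 0)"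
      by (rule card_split[OF _ pin]) simp
    moreover have "{k \<in> {1..x} - {p'}. Gf x ((arr(p' := hand)) k)} = {k \<in> {1..x} - {p'}. Gf x (arr k)}" by auto
    ultimately show ?thesis by simp
  qed
  have c2: "card {k \<in> {1..x}. Gf x (arr k)} = card {k \<in> {1..x} - {p'}. Gf x (arr k)} + (if Gf x (arr p') then 1 else 0)"
    by (rule card_split[OF _ pin]) simp
  show ?thesis unfolding Iq_def c1 c2 using True by auto
next
  case False
  then have "{k \<in> {1..x}. Gf x ((arr(p' := hand)) k)} = {k \<in> {1..x}. Gf x (arr k)}" by auto
  then show ?thesis unfolding Iq_def using False by auto
qed

lemma ups_app_le: "ups x w \<le> ups x (w @ [b])"
proof (induction x w rule: ups.induct)
  case (1 x a c r) then show ?case by simp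
next
  case ("2_1" x) then show ?case by simp
next
  case ("2_2" x a) then show ?case by simp
qed

lemma ups_pos: "hd w \<le> x \<Longrightarrow> y \<in> set w \<Longrightarrow> x < y \<Longrightarrow> 1 \<le> ups x w"
proof (induction x w rule: ups.induct)
  case (1 x a b r)
  show ?case
  proof (cases "b \<le> x")
    case True
    then have "y \<in> set (b # r)" using 1 by auto
    then have "1 \<le> ups x (b # r)" using 1 True by simp
    then show ?thesis by simp
  next
    case False then show ?thesis using 1 by simp
  qed
next
  case ("2_1" x) then show ?case by simp
next
  case ("2_2" x a) then show ?case by simp
qed

context lor
begin

definition Bq :: "nat \<Rightarrow> nat \<Rightarrow> nat" where
  "Bq x V = (if V \<le> x \<and> (\<exists>u\<in>mins. x < u) \<and> (\<forall>i\<in>{1..m}. i \<le> x \<longrightarrow> pi i \<le> x) then 1 else 0)"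

lemma Bq_mono: "V \<le> V' \<Longrightarrow> Bq x V' \<le> Bq x V"
  unfolding Bq_def by auto

lemma ups_step:
  assumes I: "Inv p h S stk arr hand V" and sh: "shape p hand V p'" and p': "p' \<in> {1..m}"
  shows "(if p \<le> x \<and> x < p' then 1 else 0) + Iq x (arr(p' := hand)) (arr p') p' + Bq x (max V p')
         \<le> Iq x arr hand p + Bq x V"
proof -
  have st: "Iq x (arr(p' := hand)) (arr p') p' + (if p \<le> x \<and> x < p' \<and> Gf x hand then 1 else 0)
       = Iq x arr hand p + (if p' \<le> x \<and> x < p \<and> Gf x hand then 1 else 0)"
    by (rule Iq_step) (use p' in simp)
  have bm: "Bq x (max V p') \<le> Bq x V" by (rule Bq_mono) simp
  consider (M1) "hand = None" "V = 0" "p' = Min mins" "p' \<in> mins"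
    | (M2) g where "hand = Some g" "min p g \<le> p'" "p' \<le> max p g"
    | (M3) g where "hand = Some g" "g \<le> p" "V = p" "NT p" "p = gmax p" "Rset p \<noteq> {}" "p' = Min (Rset p)"
    using sh unfolding shape_def by blast
  then show ?thesis
  proof cases
    case M1
    then have ng: "\<not> Gf x hand" by (simp add: Gf_def)
    then have eq: "Iq x (arr(p' := hand)) (arr p') p' = Iq x arr hand p" using st by simp
    show ?thesis
    proof (cases "p \<le> x \<and> x < p'")
      case True
      have pm: "p' \<in> mins" using M1 by simp
      have b1: "Bq x V = 1"
      proof -
        have "\<forall>i\<in>{1..m}. i \<le> x \<longrightarrow> pi i \<le> x"
        proof (intro ballI impI)
          fix i assume i: "i \<in> {1..m}" "i \<le> x"
          show "pi i \<le> x"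
          proof (rule ccontr)
            assume "\<not> pi i \<le> x"
            then have "NT i" using i NT_def by auto
            then have "mn i \<in> mins" by (rule mn_mins)
            then have "p' \<le> mn i" using M1 mins_fin by simp
            then show False using mn_le_self[of i] i True by simp
          qed
        qed
        then show ?thesis unfolding Bq_def using M1 True pm by auto
      qed
      have b0: "Bq x (max V p') = 0" unfolding Bq_def using True by simp
      show ?thesis using eq b1 b0 True by simp
    next
      case False then show ?thesis using eq bm by auto
    qed
  next
    case M2
    have "\<not> (p' \<le> x \<and> x < p \<and> Gf x hand)"
    proof
      assume a: "p' \<le> x \<and> x < p \<and> Gf x hand"
      then have "x < g" using M2 by (simp add: Gf_def)
      then show False using a M2 by (auto simp: min_def max_def split: if_splits)
    qed
    then have eq: "Iq x (arr(p' := hand)) (arr p') p' + (if p \<le> x \<and> x < p' \<and> Gf x hand then 1 else 0)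
       = Iq x arr hand p" using st by simp
    show ?thesis
    proof (cases "p \<le> x \<and> x < p'")
      case True
      then have "x < g" using M2 by (auto simp: min_def max_def split: if_splits)
      then have "Gf x hand" using M2 by (simp add: Gf_def)
      then show ?thesis using eq True bm by simp
    next
      case False then show ?thesis using eq bm by auto
    qed
  next
    case M3
    have ng: "\<not> (p \<le> x \<and> Gf x hand)" using M3 by (auto simp: Gf_def)
    have pp': "p < p'" using M3 Rset_fin Min_in Rset_def by (metis (no_types, lifting) mem_Collect_eq)
    have eq: "Iq x (arr(p' := hand)) (arr p') p' = Iq x arr hand p" using st ng pp' by auto
    show ?thesis
    proof (cases "p \<le> x \<and> x < p'")
      case True
      have pm: "p' \<in> mins" using M3 Rset_fin Min_in Rset_def by (metis (no_types, lifting) mem_Collect_eq)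
      have qmin: "\<And>u. u \<in> mins \<Longrightarrow> p < u \<Longrightarrow> p' \<le> u" using M3 Rset_fin Rset_def by simp
      have b1: "Bq x V = 1"
      proof -
        have "\<forall>i\<in>{1..m}. i \<le> x \<longrightarrow> pi i \<le> x"
        proof (intro ballI impI)
          fix i assume i: "i \<in> {1..m}" "i \<le> x"
          show "pi i \<le> x"
          proof (rule ccontr)
            assume "\<not> pi i \<le> x"
            then have NTi: "NT i" using i NT_def by auto
            show False
            proof (cases "mn i \<le> p")
              case True
              have "pi i \<le> mx i" using mx_ge cyc_pi self_cyc by blast
              then have "p < mx i" using \<open>\<not> pi i \<le> x\<close> \<open>p \<le> x \<and> x < p'\<close> by simp
              then show False using straddle[OF M3(4) NTi] True M3(5) by simp
            next
              case False
              then have "p' \<le> mn i" using qmin mn_mins[OF NTi] by simp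
              then show False using mn_le_self[of i] i \<open>p \<le> x \<and> x < p'\<close> by simp
            qed
          qed
        qed
        then show ?thesis unfolding Bq_def using M3 True pm by auto
      qed
      have b0: "Bq x (max V p') = 0" unfolding Bq_def using True by simp
      show ?thesis using eq b1 b0 True by simp
    next
      case False then show ?thesis using eq bm by auto
    qed
  qed
qed

lemma run_ok:
  "Inv p h S stk arr hand V \<Longrightarrow> Phi arr S < n \<Longrightarrow>
    snd (foldl pns (arr, hand) (opt_run n m pi (p, h, S, stk))) = None \<and>
    (\<forall>i\<in>{1..m}. fst (foldl pns (arr, hand) (opt_run n m pi (p, h, S, stk))) i = Some i) \<and>
    length (opt_run n m pi (p, h, S, stk)) = Phi arr S \<and>
    set (opt_run n m pi (p, h, S, stk)) \<subseteq> {1..m} \<and>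
    (\<forall>x. ups x (p # opt_run n m pi (p, h, S, stk) @ [1]) \<le> Iq x arr hand p + Bq x V)"
proof (induction n arbitrary: p h S stk arr hand V)
  case 0 then show ?case by simp
next
  case (Suc n)
  note I = Suc.prems(1)
  show ?case
  proof (cases "opt_step m pi (p, h, S, stk)")
    case None
    note sn = step_None[OF I None]
    have p1: "1 \<le> p" using InvD_p1[OF I] .
    have "ups x [p, 1] = 0" for x using p1 by simp
    then show ?thesis using sn None by simp
  next
    case (Some r)
    obtain p' s' where r: "r = (p', s')" by (cases r) blast
    obtain h' S' stk' where s': "s' = (p', h', S', stk')"
      and I': "Inv p' h' S' stk' (arr(p' := hand)) (arr p') (max V p')"
      and ph: "Phi (arr(p' := hand)) S' + 1 = Phi arr S" and p'm: "p' \<in> {1..m}"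
      and sh: "shape p hand V p'"
      using step_ok[OF I] Some r by blast
    have "Phi (arr(p' := hand)) S' < n" using ph Suc.prems(2) by simp
    note IH = Suc.IH[OF I' this]
    have run: "opt_run (Suc n) m pi (p, h, S, stk) = p' # opt_run n m pi (p', h', S', stk')"
      using Some r s' by simp
    have fold: "foldl pns (arr, hand) (opt_run (Suc n) m pi (p, h, S, stk))
        = foldl pns (arr(p' := hand), arr p') (opt_run n m pi (p', h', S', stk'))"
      using run by simp
    have u: "ups x (p # opt_run (Suc n) m pi (p, h, S, stk) @ [1]) \<le> Iq x arr hand p + Bq x V" for x
    proof -
      have "ups x (p # opt_run (Suc n) m pi (p, h, S, stk) @ [1])
          = (if p \<le> x \<and> x < p' then 1 else 0) + ups x (p' # opt_run n m pi (p', h', S', stk') @ [1])"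
        using run by simp
      also have "\<dots> \<le> (if p \<le> x \<and> x < p' then 1 else 0) + Iq x (arr(p' := hand)) (arr p') p' + Bq x (max V p')"
      proof -
        have "ups x (p' # opt_run n m pi (p', h', S', stk') @ [1]) \<le> Iq x (arr(p' := hand)) (arr p') p' + Bq x (max V p')"
          using IH by blast
        then show ?thesis by linarith
      qed
      also have "\<dots> \<le> Iq x arr hand p + Bq x V" using ups_step[OF I sh p'm] by simp
      finally show ?thesis .
    qed
    define R' where "R' = opt_run n m pi (p', h', S', stk')"
    have i1: "snd (foldl pns (arr(p' := hand), arr p') R') = None"
      "\<forall>i\<in>{1..m}. fst (foldl pns (arr(p' := hand), arr p') R') i = Some i"
      "length R' = Phi (arr(p' := hand)) S'" "set R' \<subseteq> {1..m}"
      using IH unfolding R'_def by blast+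
    show ?thesis
    proof (intro conjI)
      show "snd (foldl pns (arr, hand) (opt_run (Suc n) m pi (p, h, S, stk))) = None"
        unfolding fold R'_def[symmetric] by (rule i1(1))
      show "\<forall>i\<in>{1..m}. fst (foldl pns (arr, hand) (opt_run (Suc n) m pi (p, h, S, stk))) i = Some i"
        unfolding fold R'_def[symmetric] by (rule i1(2))
      show "length (opt_run (Suc n) m pi (p, h, S, stk)) = Phi arr S"
        unfolding run R'_def[symmetric] using i1(3) ph by simp
      show "set (opt_run (Suc n) m pi (p, h, S, stk)) \<subseteq> {1..m}"
        unfolding run R'_def[symmetric] using i1(4) p'm by simp
      show "\<forall>x. ups x (p # opt_run (Suc n) m pi (p, h, S, stk) @ [1]) \<le> Iq x arr hand p + Bq x V"
        using u by blast
    qed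
  qed
qed

end

fun downs :: "nat \<Rightarrow> nat list \<Rightarrow> nat" where
  "downs x (a # b # r) = (if b \<le> x \<and> x < a then 1 else 0) + downs x (b # r)"
| "downs x _ = 0"

lemma ups_downs: "w \<noteq> [] \<Longrightarrow> ups x w + (if last w \<le> x then 1 else 0) = downs x w + (if hd w \<le> x then 1 else 0)"
proof (induction x w rule: ups.induct)
  case (1 x a b r)
  have "ups x (b # r) + (if last (b # r) \<le> x then 1 else 0) = downs x (b # r) + (if b \<le> x then 1 else 0)"
    using 1 by simp
  then show ?case by auto
next
  case ("2_1" x) then show ?case by simp
next
  case ("2_2" x a) then show ?case by simp
qed

lemma sum_ind: "finite A \<Longrightarrow> (\<Sum>x\<in>A. (if P x then 1 else 0::nat)) = card {x \<in> A. P x}"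
  by (simp add: sum.inter_filter[symmetric])

lemma cdist_sum:
  assumes "a \<in> {1..K}" "b \<in> {1..K}"
  shows "cdist a b = (\<Sum>x\<in>{1..<K}. (if a \<le> x \<and> x < b then 1 else 0) + (if b \<le> x \<and> x < a then 1 else 0))"
proof -
  have e1: "{x \<in> {1..<K}. a \<le> x \<and> x < b} = {a..<b}" using assms by auto
  have e2: "{x \<in> {1..<K}. b \<le> x \<and> x < a} = {b..<a}" using assms by auto
  have "(\<Sum>x\<in>{1..<K}. (if a \<le> x \<and> x < b then 1 else 0) + (if b \<le> x \<and> x < a then 1 else 0))
      = (\<Sum>x\<in>{1..<K}. (if a \<le> x \<and> x < b then 1 else 0::nat)) + (\<Sum>x\<in>{1..<K}. (if b \<le> x \<and> x < a then 1 else 0))"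
    by (rule sum.distrib)
  also have "\<dots> = (b - a) + (a - b)" using sum_ind[of "{1..<K}"] e1 e2 by simp
  also have "\<dots> = cdist a b" unfolding cdist_def by (simp add: max_def min_def)
  finally show ?thesis by simp
qed

lemma path_len_sum: "set w \<subseteq> {1..K} \<Longrightarrow> path_len w = (\<Sum>x\<in>{1..<K}. ups x w + downs x w)"
proof (induction w rule: path_len.induct)
  case (1 a b rest)
  have ih: "path_len (b # rest) = (\<Sum>x\<in>{1..<K}. ups x (b # rest) + downs x (b # rest))" using 1 by simp
  have cd: "cdist a b = (\<Sum>x\<in>{1..<K}. (if a \<le> x \<and> x < b then 1 else 0) + (if b \<le> x \<and> x < a then 1 else 0))"
    by (rule cdist_sum) (use 1 in auto)
  have "path_len (a # b # rest) = cdist a b + path_len (b # rest)" by simp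
  also have "\<dots> = (\<Sum>x\<in>{1..<K}. ((if a \<le> x \<and> x < b then 1 else 0) + (if b \<le> x \<and> x < a then 1 else 0))
          + (ups x (b # rest) + downs x (b # rest)))"
    using cd ih by (simp add: sum.distrib)
  also have "\<dots> = (\<Sum>x\<in>{1..<K}. ups x (a # b # rest) + downs x (a # b # rest))"
    by (rule sum.cong) auto
  finally show ?case .
next
  case ("2_1") then show ?case by simp
next
  case ("2_2" v) then show ?case by simp
qed

lemma travel_sum:
  assumes "set ps \<subseteq> {1..K}" "1 \<le> K"
  shows "travel ps = (\<Sum>x\<in>{1..<K}. 2 * ups x (1 # ps @ [1]))"
proof -
  have "travel ps = (\<Sum>x\<in>{1..<K}. ups x (1 # ps @ [1]) + downs x (1 # ps @ [1]))"
    unfolding travel_def by (rule path_len_sum) (use assms in auto)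
  also have "\<dots> = (\<Sum>x\<in>{1..<K}. 2 * ups x (1 # ps @ [1]))"
  proof (rule sum.cong)
    fix x
    have "ups x (1 # ps @ [1]) + (if last (1 # ps @ [1]) \<le> x then 1 else 0)
        = downs x (1 # ps @ [1]) + (if hd (1 # ps @ [1]) \<le> x then 1 else 0)"
      by (rule ups_downs) simp
    then show "ups x (1 # ps @ [1]) + downs x (1 # ps @ [1]) = 2 * ups x (1 # ps @ [1])" by simp
  qed simp
  finally show ?thesis .
qed

lemma foldl_frame: "k \<notin> set ys \<Longrightarrow> fst (foldl pns s ys) k = fst s k"
proof (induction ys arbitrary: s)
  case Nil then show ?case by simp
next
  case (Cons a ys)
  obtain ar h where s: "s = (ar, h)" by fastforce
  have "fst (foldl pns s (a # ys)) k = fst (foldl pns (pns s a) ys) k" by simp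
  also have "\<dots> = fst (pns s a) k" using Cons by simp
  also have "\<dots> = fst s k" using Cons.prems s by simp
  finally show ?case .
qed

lemma Iq_lb:
  "set ps \<subseteq> {1..m} \<Longrightarrow> Iq x arr hand p \<le> ups x (p # ps) +
     Iq x (fst (foldl pns (arr, hand) ps)) (snd (foldl pns (arr, hand) ps)) (last (p # ps))"
proof (induction ps arbitrary: p arr hand)
  case Nil then show ?case by simp
next
  case (Cons p' ps)
  have p1: "1 \<le> p'" using Cons.prems by auto
  have IH: "Iq x (arr(p' := hand)) (arr p') p' \<le> ups x (p' # ps) +
     Iq x (fst (foldl pns (arr(p' := hand), arr p') ps)) (snd (foldl pns (arr(p' := hand), arr p') ps)) (last (p' # ps))"
    using Cons by simp
  have st: "Iq x (arr(p' := hand)) (arr p') p' + (if p \<le> x \<and> x < p' \<and> Gf x hand then 1 else 0)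
       = Iq x arr hand p + (if p' \<le> x \<and> x < p \<and> Gf x hand then 1 else 0)"
    by (rule Iq_step[OF p1])
  have "ups x (p # p' # ps) = (if p \<le> x \<and> x < p' then 1 else 0) + ups x (p' # ps)" by simp
  moreover have "foldl pns (arr, hand) (p' # ps) = foldl pns (arr(p' := hand), arr p') ps" by simp
  moreover have "last (p # p' # ps) = last (p' # ps)" by simp
  ultimately show ?case using IH st by (auto split: if_splits)
qed

context lor
begin

lemma Inv_init: "Inv 1 None {} [] (init_arr pi) None 0"
proof (rule InvI_F)
  show "F_hand 1 None {} [] (init_arr pi) None 0" unfolding F_hand_def by simp
  show "F_p1 1 None {} [] (init_arr pi) None 0" unfolding F_p1_def by simp
  show "F_stk 1 None {} [] (init_arr pi) None 0" unfolding F_stk_def by simp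
  show "F_chain 1 None {} [] (init_arr pi) None 0" unfolding F_chain_def by simp
  show "F_goals 1 None {} [] (init_arr pi) None 0" unfolding F_goals_def by simp
  show "F_C4a 1 None {} [] (init_arr pi) None 0" unfolding F_C4a_def init_arr_def by simp
  show "F_C4b 1 None {} [] (init_arr pi) None 0" unfolding F_C4b_def by simp
  show "F_C4c 1 None {} [] (init_arr pi) None 0" unfolding F_C4c_def by simp
  show "F_S 1 None {} [] (init_arr pi) None 0" unfolding F_S_def using mins_D NT_def by fastforce
  show "F_I4 1 None {} [] (init_arr pi) None 0" unfolding F_I4_def init_arr_def by simp
  show "F_I5 1 None {} [] (init_arr pi) None 0" unfolding F_I5_def by simp
  show "F_pos 1 None {} [] (init_arr pi) None 0" unfolding F_pos_def by simp
  show "F_I6 1 None {} [] (init_arr pi) None 0" unfolding F_I6_def by simp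
  show "F_K3 1 None {} [] (init_arr pi) None 0" unfolding F_K3_def by simp
  show "F_K4 1 None {} [] (init_arr pi) None 0" unfolding F_K4_def init_arr_def NT_def by simp
  show "F_I9 1 None {} [] (init_arr pi) None 0" unfolding F_I9_def by simp
qed

definition MIS :: "nat set" where "MIS = {i \<in> {1..m}. pi i \<noteq> i}"

lemma Phi_init: "Phi (init_arr pi) {} = card MIS + card mins"
  unfolding Phi_def MIS_def init_arr_def by simp

lemma card_mins_le: "card mins \<le> m"
proof -
  have "mins \<subseteq> {1..m}" using mins_D NT_in by blast
  then show ?thesis using card_mono[of "{1..m}" mins] by simp
qed

lemma card_MIS_le: "card MIS \<le> m"
proof -
  have "MIS \<subseteq> {1..m}" unfolding MIS_def by blast
  then show ?thesis using card_mono[of "{1..m}" MIS] by simp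
qed

lemma alg_facts:
  shows "snd (exec_plan pi (opt_plan_lor m pi)) = None"
    "\<forall>i\<in>{1..m}. fst (exec_plan pi (opt_plan_lor m pi)) i = Some i"
    "length (opt_plan_lor m pi) = card MIS + card mins"
    "set (opt_plan_lor m pi) \<subseteq> {1..m}"
    "\<forall>x. ups x (1 # opt_plan_lor m pi @ [1]) \<le> Iq x (init_arr pi) None 1 + Bq x 0"
proof -
  have "Phi (init_arr pi) {} < 2 * m + 1" using Phi_init card_mins_le card_MIS_le by simp
  note r = run_ok[OF Inv_init this]
  show "snd (exec_plan pi (opt_plan_lor m pi)) = None"
    "\<forall>i\<in>{1..m}. fst (exec_plan pi (opt_plan_lor m pi)) i = Some i"
    "length (opt_plan_lor m pi) = card MIS + card mins"
    "set (opt_plan_lor m pi) \<subseteq> {1..m}"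
    "\<forall>x. ups x (1 # opt_plan_lor m pi @ [1]) \<le> Iq x (init_arr pi) None 1 + Bq x 0"
    using r Phi_init unfolding exec_plan_def opt_plan_lor_def by auto
qed

end

context lor
begin

lemma pre_inv:
  "(\<forall>k. k \<notin> set ys \<longrightarrow> fst (foldl pns (init_arr pi, None) ys) k = Some (pi k)) \<and>
   (\<forall>x. snd (foldl pns (init_arr pi, None) ys) = Some x \<longrightarrow> (\<exists>k\<in>set ys. x = pi k)) \<and>
   (\<forall>k\<in>set ys. \<forall>x. fst (foldl pns (init_arr pi, None) ys) k = Some x \<longrightarrow> (\<exists>k'\<in>set ys. x = pi k'))"
proof (induction ys rule: rev_induct)
  case Nil then show ?case by (simp add: init_arr_def)
next
  case (snoc p ys)
  obtain a hh where st: "foldl pns (init_arr pi, None) ys = (a, hh)" by fastforce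
  have c1: "\<forall>k. k \<notin> set ys \<longrightarrow> a k = Some (pi k)" using snoc st by simp
  have c2: "\<forall>x. hh = Some x \<longrightarrow> (\<exists>k\<in>set ys. x = pi k)" using snoc st by simp
  have c3: "\<forall>k\<in>set ys. \<forall>x. a k = Some x \<longrightarrow> (\<exists>k'\<in>set ys. x = pi k')" using snoc st by simp
  have e: "foldl pns (init_arr pi, None) (ys @ [p]) = (a(p := hh), a p)" using st by simp
  show ?case unfolding e
  proof (intro conjI allI impI ballI)
    fix k assume "k \<notin> set (ys @ [p])"
    then show "fst (a(p := hh), a p) k = Some (pi k)" using c1 by simp
  next
    fix x assume x: "snd (a(p := hh), a p) = Some x"
    show "\<exists>k\<in>set (ys @ [p]). x = pi k"
    proof (cases "p \<in> set ys")
      case True then show ?thesis using c3 x by auto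
    next
      case False then show ?thesis using c1 x by auto
    qed
  next
    fix k x assume k: "k \<in> set (ys @ [p])" and x: "fst (a(p := hh), a p) k = Some x"
    show "\<exists>k'\<in>set (ys @ [p]). x = pi k'"
    proof (cases "k = p")
      case True then show ?thesis using c2 x by auto
    next
      case False then show ?thesis using c3 x k by auto
    qed
  qed
qed

lemma LC_fin: "finite LC"
proof -
  have "LC \<subseteq> Pow {1..m}" using LC_sub by blast
  then show ?thesis using finite_subset by blast
qed

lemma card_LC: "card LC = card mins"
proof -
  have "bij_betw Min LC mins"
  proof (rule bij_betw_imageI)
    show "inj_on Min LC" using LC_Min by (metis inj_onI)
    show "Min ` LC = mins"
    proof
      show "Min ` LC \<subseteq> mins" using LC_Min by blast
      show "mins \<subseteq> Min ` LC"
      proof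
        fix u assume u: "u \<in> mins"
        then have "cyc u \<in> LC" "Min (cyc u) = u" using mins_D LC_cyc mn_def by auto
        then show "u \<in> Min ` LC" by force
      qed
    qed
  qed
  then show ?thesis by (rule bij_betw_same_card)
qed

lemma len_lb:
  assumes v: "valid_plan m pi ps"
  shows "card MIS + card mins \<le> length ps"
proof -
  have sub: "set ps \<subseteq> {1..m}" and fin: "\<forall>i\<in>{1..m}. fst (exec_plan pi ps) i = Some i"
    using v unfolding valid_plan_def by auto
  define N where "N = length ps"
  define ini where "ini = (init_arr pi, (None :: nat option))"
  define st where "st j = foldl pns ini (take j ps)" for j
  have visit: "i \<in> set ps" if i: "i \<in> MIS" for i
  proof (rule ccontr)
    assume "i \<notin> set ps"
    then have "fst (exec_plan pi ps) i = Some (pi i)"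
      unfolding exec_plan_def using foldl_frame by (simp add: init_arr_def)
    then show False using fin i unfolding MIS_def by auto
  qed
  define J where "J i = {j. j < N \<and> ps ! j = i}" for i
  define Lx where "Lx i = Max (J i)" for i
  have Jfin: "finite (J i)" for i unfolding J_def by simp
  have L1: "Lx i < N \<and> ps ! (Lx i) = i" if i: "i \<in> MIS" for i
  proof -
    have "J i \<noteq> {}" using visit[OF i] unfolding J_def N_def by (auto simp: in_set_conv_nth)
    then have "Lx i \<in> J i" unfolding Lx_def using Jfin Max_in by blast
    then show ?thesis unfolding J_def by simp
  qed
  have L2: "i \<notin> set (drop (Suc (Lx i)) ps)" if i: "i \<in> MIS" for i
  proof
    assume "i \<in> set (drop (Suc (Lx i)) ps)"
    then obtain k where k: "k < length (drop (Suc (Lx i)) ps)" "drop (Suc (Lx i)) ps ! k = i"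
      by (auto simp: in_set_conv_nth)
    then have "Suc (Lx i) + k < N" "ps ! (Suc (Lx i) + k) = i" unfolding N_def by auto
    then have "Suc (Lx i) + k \<in> J i" unfolding J_def by simp
    then have "Suc (Lx i) + k \<le> Lx i" unfolding Lx_def using Jfin by simp
    then show False by simp
  qed
  have handL: "snd (st (Lx i)) = Some i" if i: "i \<in> MIS" for i
  proof -
    define L where "L = Lx i"
    have LN: "L < N" "ps ! L = i" using L1[OF i] L_def by auto
    have tk: "take (Suc L) ps = take L ps @ [ps ! L]" using LN N_def by (simp add: take_Suc_conv_app_nth)
    have "exec_plan pi ps = foldl pns (foldl pns ini (take (Suc L) ps)) (drop (Suc L) ps)"
      unfolding exec_plan_def ini_def by (metis append_take_drop_id foldl_append)
    then have "fst (exec_plan pi ps) i = fst (foldl pns ini (take (Suc L) ps)) i"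
      using foldl_frame L2[OF i] L_def by simp
    also have "\<dots> = fst (pns (st L) (ps ! L)) i" unfolding st_def tk by simp
    also have "\<dots> = snd (st L)"
    proof -
      obtain a hh where "st L = (a, hh)" by fastforce
      then show ?thesis using LN by simp
    qed
    finally have "snd (st L) = fst (exec_plan pi ps) i" by simp
    moreover have "i \<in> {1..m}" using i MIS_def by simp
    ultimately show ?thesis using fin L_def by simp
  qed
  define Fx where "Fx c = Min {j. j < N \<and> ps ! j \<in> c}" for c
  have F1: "Fx c < N \<and> ps ! (Fx c) \<in> c \<and> (\<forall>j. j < N \<longrightarrow> ps ! j \<in> c \<longrightarrow> Fx c \<le> j)" if c: "c \<in> LC" for c
  proof -
    have mc: "Min c \<in> mins" "c = cyc (Min c)" using LC_Min[OF c] by auto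
    then have "Min c \<in> MIS" using mins_D NT_def MIS_def by auto
    then have "Min c \<in> set ps" by (rule visit)
    then obtain j where j: "j < N" "ps ! j = Min c" unfolding N_def by (auto simp: in_set_conv_nth)
    have "Min c \<in> c" using mc self_cyc by metis
    then have ne: "{j. j < N \<and> ps ! j \<in> c} \<noteq> {}" using j by auto
    have fn: "finite {j. j < N \<and> ps ! j \<in> c}" by simp
    have "Fx c \<in> {j. j < N \<and> ps ! j \<in> c}" unfolding Fx_def using Min_in[OF fn ne] .
    moreover have "\<forall>j. j < N \<longrightarrow> ps ! j \<in> c \<longrightarrow> Fx c \<le> j" unfolding Fx_def using fn by simp
    ultimately show ?thesis by simp
  qed
  have disj: "Lx i \<noteq> Fx c" if i: "i \<in> MIS" and c: "c \<in> LC" for i c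
  proof
    assume eq: "Lx i = Fx c"
    define j where "j = Lx i"
    have jN: "j < N" "ps ! j = i" using L1[OF i] j_def by auto
    have "ps ! j \<in> c" using F1[OF c] eq j_def by simp
    then have ic: "i \<in> c" using jN by simp
    then have cc: "c = cyc i" using LC_mem[OF c] by blast
    have "snd (st j) = Some i" using handL[OF i] j_def by simp
    then obtain k where k: "k \<in> set (take j ps)" "i = pi k"
      using pre_inv[of "take j ps"] unfolding st_def ini_def by blast
    then obtain j' where j': "j' < length (take j ps)" "take j ps ! j' = k" by (auto simp: in_set_conv_nth)
    then have j'': "j' < j" "ps ! j' = k" using jN N_def by auto
    have "pi k \<in> cyc i" using k(2) by simp
    then have "k \<in> c" using cyc_pi_inv cc by blast
    then have "Fx c \<le> j'" using F1[OF c] j'' jN by simp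
    then show False using j'' eq j_def by simp
  qed
  have injL: "inj_on Lx MIS" using L1 by (metis inj_onI)
  have injF: "inj_on Fx LC"
  proof (rule inj_onI)
    fix c c' assume c: "c \<in> LC" "c' \<in> LC" "Fx c = Fx c'"
    have "ps ! (Fx c) \<in> c" using F1[OF c(1)] by blast
    moreover have "ps ! (Fx c') \<in> c'" using F1[OF c(2)] by blast
    ultimately have "ps ! (Fx c) \<in> c" "ps ! (Fx c) \<in> c'" using c(3) by auto
    then show "c = c'" using LC_mem c by metis
  qed
  have finMIS: "finite MIS" unfolding MIS_def by simp
  have "Lx ` MIS \<inter> Fx ` LC = {}" using disj by blast
  then have "card (Lx ` MIS \<union> Fx ` LC) = card MIS + card LC"
    using card_Un_disjoint[of "Lx ` MIS" "Fx ` LC"] finMIS LC_fin card_image[OF injL] card_image[OF injF] by simp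
  moreover have "Lx ` MIS \<union> Fx ` LC \<subseteq> {..<N}" using L1 F1 by auto
  then have "card (Lx ` MIS \<union> Fx ` LC) \<le> N" using card_mono[of "{..<N}"] by fastforce
  ultimately show ?thesis using card_LC N_def by simp
qed

lemma ups_cmp:
  assumes v: "valid_plan m pi ps" and x: "1 \<le> x"
  shows "ups x (1 # opt_plan_lor m pi @ [1]) \<le> ups x (1 # ps @ [1])"
proof -
  have sub: "set ps \<subseteq> {1..m}" and hN: "snd (exec_plan pi ps) = None"
    and fin: "\<forall>i\<in>{1..m}. fst (exec_plan pi ps) i = Some i"
    using v unfolding valid_plan_def by auto
  define F where "F = exec_plan pi ps"
  have allc: "fst F k = Some k" for k
  proof (cases "k \<in> {1..m}")
    case True then show ?thesis using fin F_def by simp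
  next
    case False
    then have "k \<notin> set ps" using sub by blast
    then have "fst F k = Some (pi k)" unfolding F_def exec_plan_def using foldl_frame by (simp add: init_arr_def)
    then show ?thesis using pi_out False by simp
  qed
  have I0: "Iq x (fst F) (snd F) q = 0" for q
  proof -
    have "{k \<in> {1..x}. Gf x (fst F k)} = {}" using allc by (auto simp: Gf_def)
    then show ?thesis unfolding Iq_def using hN F_def by (simp add: Gf_def)
  qed
  have lb: "Iq x (init_arr pi) None 1 \<le> ups x (1 # ps @ [1])"
  proof -
    have "Iq x (init_arr pi) None 1 \<le> ups x (1 # ps) + Iq x (fst F) (snd F) (last (1 # ps))"
      using Iq_lb[OF sub] unfolding F_def exec_plan_def by blast
    also have "\<dots> = ups x (1 # ps)" using I0 by simp
    also have "\<dots> \<le> ups x ((1 # ps) @ [1])" by (rule ups_app_le)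
    finally show ?thesis by simp
  qed
  have ub: "ups x (1 # opt_plan_lor m pi @ [1]) \<le> Iq x (init_arr pi) None 1 + Bq x 0"
    using alg_facts(5) by blast
  show ?thesis
  proof (cases "Bq x 0 = 0")
    case True then show ?thesis using lb ub by simp
  next
    case False
    then have b: "\<exists>u\<in>mins. x < u" "\<forall>i\<in>{1..m}. i \<le> x \<longrightarrow> pi i \<le> x" unfolding Bq_def by (auto split: if_splits)
    then have "Bq x 0 = 1" unfolding Bq_def by simp
    have "{k \<in> {1..x}. Gf x (init_arr pi k)} = {}"
    proof -
      have "\<not> x < pi k" if "k \<in> {1..x}" for k
      proof (cases "k \<in> {1..m}")
        case True then show ?thesis using b that by auto
      next
        case False then show ?thesis using pi_out that by simp
      qed
      then show ?thesis by (auto simp: Gf_def init_arr_def)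
    qed
    then have "Iq x (init_arr pi) None 1 = 0" unfolding Iq_def by (simp add: Gf_def)
    then have u1: "ups x (1 # opt_plan_lor m pi @ [1]) \<le> 1" using ub \<open>Bq x 0 = 1\<close> by simp
    obtain u where u: "u \<in> mins" "x < u" using b by blast
    have "u \<in> set ps"
    proof (rule ccontr)
      assume "u \<notin> set ps"
      then have "fst F u = Some (pi u)" unfolding F_def exec_plan_def using foldl_frame by (simp add: init_arr_def)
      moreover have "pi u \<noteq> u" using u mins_D NT_def by blast
      ultimately show False using allc[of u] by simp
    qed
    then have "1 \<le> ups x (1 # ps @ [1])" using ups_pos[of "1 # ps @ [1]" x u] x u by simp
    then show ?thesis using u1 by simp
  qed
qed

end

theorem theorem1:
  fixes m :: nat and pi :: "nat \<Rightarrow> nat"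
  assumes "pi permutes {1..m}"
  shows "valid_plan m pi (opt_plan_lor m pi)
       \<and> (\<forall>ps. valid_plan m pi ps \<longrightarrow> length (opt_plan_lor m pi) \<le> length ps)
       \<and> (\<forall>ps. valid_plan m pi ps \<and> length ps = length (opt_plan_lor m pi)
               \<longrightarrow> travel (opt_plan_lor m pi) \<le> travel ps)"
proof -
  interpret L: lor m pi by (unfold_locales) (rule assms)
  have v: "valid_plan m pi (opt_plan_lor m pi)"
    unfolding valid_plan_def using L.alg_facts(1,2,4) by blast
  have l: "\<forall>ps. valid_plan m pi ps \<longrightarrow> length (opt_plan_lor m pi) \<le> length ps"
    using L.alg_facts(3) L.len_lb by simp
  have t: "travel (opt_plan_lor m pi) \<le> travel ps" if ps: "valid_plan m pi ps" for ps
  proof -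
    define K where "K = max m 1"
    have K1: "1 \<le> K" unfolding K_def by simp
    have s1: "set (opt_plan_lor m pi) \<subseteq> {1..K}" using L.alg_facts(4) K_def by auto
    have s2: "set ps \<subseteq> {1..K}" using ps K_def unfolding valid_plan_def by auto
    have "travel (opt_plan_lor m pi) = (\<Sum>x\<in>{1..<K}. 2 * ups x (1 # opt_plan_lor m pi @ [1]))"
      by (rule travel_sum[OF s1 K1])
    also have "\<dots> \<le> (\<Sum>x\<in>{1..<K}. 2 * ups x (1 # ps @ [1]))"
      by (rule sum_mono) (use L.ups_cmp[OF ps] in auto)
    also have "\<dots> = travel ps" by (rule travel_sum[OF s2 K1, symmetric])
    finally show ?thesis .
  qed
  show ?thesis using v l t by blast
qed

end
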